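(* Let $n\ge2$, and let $\ell=(\ell_1,\dots,\ell_n)\in\mathbb C^n$ with $\sum_j\ell_j=0$ and $|\mathrm{Re}(\ell_j)|<\tfrac12$ for all $j$. For $\delta>0$ put $$\mathrm{LB}_\delta(\ell):=1-\frac{4\left(e^{\frac{n(n+6)}{4}\delta}-1\right)}{n(n+6)}\sum_{j=1}^n\left|\ell_j+\frac{n-2j+1}{2}\right|.$$ If $\delta>0$ is such that $\mathrm{LB}_\delta(\ell)>0$, then for every standard bump function $H_\delta$ one has $|\widehat{H_\delta}(\ell)|>\mathrm{LB}_\delta(\ell)$.
   Context: Iwasawa coordinates: $g=x\,a_{y_1,\dots,y_{n-1}}\,\xi$ with $x$ real upper triangular unipotent, $\xi\in SO(n,\mathbb R)$, $a_{y_1,\dots,y_{n-1}}=(\prod_jy_j^{n-j})^{-1/n}\mathrm{diag}(y_1\cdots y_{n-1},\dots,y_1,1)$. Set $\varphi_\ell(g)=\prod_{j=1}^{n-1}y_j^{\sum_{k=1}^{n-j}(\ell_k+\frac{n-2k+1}{2})}$ and $\beta_\ell(g)=\int_{SO(n,\mathbb R)}\varphi_\ell(\xi g)\,d\xi$ (normalized Haar measure). Polar height: $\sigma(g)=\|a\|$ where $g=\xi_1\mathrm{diag}(e^{a_1},\dots,e^{a_n})\xi_2$, $\xi_i\in SO(n,\mathbb R)$; $B_\delta=\{g\in SL(n,\mathbb R):\sigma(g)<\delta\}$. A standard bump function $H_\delta$ is a smooth compactly supported bi-$SO(n,\mathbb R)$-invariant function on $SL(n,\mathbb R)$ with $\mathrm{supp}\,H_\delta\subset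 B_\delta$, $H_\delta(g)=H_\delta(g^{-1})$, $H_\delta\ge0$, $\int_{SL(n,\mathbb R)}H_\delta\,dg=1$ (Haar measure). For a bi-$SO(n,\mathbb R)$-invariant compactly supported $k$, its spherical transform $\widehat k(\ell)$ is defined by $\beta_\ell*k=\widehat k(\ell)\beta_\ell$, where $(f*k)(g)=\int_{SL(n,\mathbb R)}f(gh^{-1})k(h)\,dh$; for $H_\delta$ this equals $\int H_\delta(g)\varphi_\ell(g)\,dg$. *)

theory Defs
  imports "HOL-Analysis.Analysis"
begin

text \<open>SL(n,R) is modelled on the type real^'n^'n of n x n real matrices,
  where the index type 'n is finite and linearly ordered; n = CARD('n).
  The rows/columns are numbered 1..n by their position in the order on 'n.\<close>

type_synonym 'n sqmat = "real^'n^'n"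

definition SLn :: "('n::finite) sqmat set" where
  "SLn = {g. det g = 1}"

definition SOn :: "('n::finite) sqmat set" where
  "SOn = {k. rotation_matrix k}"

definition pos :: "'n::{finite,linorder} \<Rightarrow> nat" where
  "pos i = card {k. k < i}"

definition upper_unipotent :: "('n::{finite,linorder}) sqmat \<Rightarrow> bool" where
  "upper_unipotent x \<longleftrightarrow> (\<forall>i. x $ i $ i = 1) \<and> (\<forall>i j. j < i \<longrightarrow> x $ i $ j = 0)"

text \<open>a_{y_1..y_{n-1}} = (prod_j y_j^(n-j))^(-1/n) diag(y_1...y_{n-1}, ..., y_1, 1);
  the diagonal entry in position p (0-based) is the product of y_1..y_{n-1-p}.\<close>
definition a_mat :: "(nat \<Rightarrow> real) \<Rightarrow> ('n::{finite,linorder}) sqmat" where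
  "a_mat y = (\<chi> i j. if i = j then
      (\<Prod>j\<in>{1..CARD('n)-1}. y j ^ (CARD('n) - j)) powr (-1 / real CARD('n))
        * (\<Prod>k\<in>{1..CARD('n) - 1 - pos i}. y k)
      else 0)"

definition iwasawa_y :: "('n::{finite,linorder}) sqmat \<Rightarrow> nat \<Rightarrow> real" where
  "iwasawa_y g = (SOME y. (\<forall>j\<in>{1..CARD('n)-1}. y j > 0)
       \<and> (\<forall>j. j \<notin> {1..CARD('n)-1} \<longrightarrow> y j = 1)
       \<and> (\<exists>x \<xi>. upper_unipotent x \<and> \<xi> \<in> SOn \<and> g = x ** (a_mat y :: 'n sqmat) ** \<xi>))"

text \<open>phi_l(g) = prod_{j=1}^{n-1} y_j^(sum_{k=1}^{n-j} (l_k + (n-2k+1)/2)).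
  l is given as a function on nat, of which l_1..l_n are used.\<close>
definition phi :: "(nat \<Rightarrow> complex) \<Rightarrow> ('n::{finite,linorder}) sqmat \<Rightarrow> complex" where
  "phi l g = (\<Prod>j\<in>{1..CARD('n)-1}.
      (complex_of_real (iwasawa_y g j)) powr
        (\<Sum>k\<in>{1..CARD('n)-j}. l k + complex_of_real ((real CARD('n) - 2 * real k + 1) / 2)))"

definition exp_diag :: "real^'n \<Rightarrow> ('n::finite) sqmat" where
  "exp_diag a = (\<chi> i j. if i = j then exp (a $ i) else 0)"

definition polar_height :: "('n::finite) sqmat \<Rightarrow> real" where
  "polar_height g = (SOME r. \<exists>\<xi>1 \<xi>2 a. \<xi>1 \<in> SOn \<and> \<xi>2 \<in> SOn
       \<and> g = \<xi>1 ** exp_diag a ** \<xi>2 \<and> r = norm a)"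

definition ball_SL :: "real \<Rightarrow> ('n::finite) sqmat set" where
  "ball_SL \<delta> = {g \<in> SLn. polar_height g < \<delta>}"

text \<open>C-infinity functions on a Euclidean space: all iterated partial derivatives exist.\<close>
coinductive smooth_fun :: "('a::euclidean_space \<Rightarrow> real) \<Rightarrow> bool" where
  "(\<forall>x. f differentiable (at x)) \<Longrightarrow>
   (\<forall>b\<in>Basis. smooth_fun (\<lambda>x. frechet_derivative f (at x) b)) \<Longrightarrow> smooth_fun f"

text \<open>Haar measures on SL(n,R): nonzero, locally finite, left-invariant Borel measures
  concentrated on the closed subset SL(n,R) of the matrix space.  (SL(n,R) is unimodular,
  and the quantity in the theorem does not depend on the normalization.)\<close>
definition haar_SL :: "('n::finite) sqmat measure \<Rightarrow> bool" where
  "haar_SL \<mu> \<longleftrightarrow> sets \<mu> = sets borel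
     \<and> emeasure \<mu> (UNIV - SLn) = 0
     \<and> emeasure \<mu> SLn > 0
     \<and> (\<forall>K. compact K \<longrightarrow> emeasure \<mu> K < \<infinity>)
     \<and> (\<forall>h\<in>SLn. \<forall>A\<in>sets borel. A \<subseteq> SLn \<longrightarrow>
            emeasure \<mu> ((\<lambda>g. h ** g) ` A) = emeasure \<mu> A)"

text \<open>Standard bump functions H_delta, as functions on SL(n,R) extended by 0.\<close>
definition standard_bump :: "('n::finite) sqmat measure \<Rightarrow> real \<Rightarrow> ('n sqmat \<Rightarrow> real) \<Rightarrow> bool" where
  "standard_bump \<mu> \<delta> H \<longleftrightarrow>
     (\<forall>g. g \<notin> SLn \<longrightarrow> H g = 0)
   \<and> (\<exists>F. smooth_fun F \<and> (\<forall>g\<in>SLn. F g = H g))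
   \<and> compact (closure {g \<in> SLn. H g \<noteq> 0})
   \<and> closure {g \<in> SLn. H g \<noteq> 0} \<subseteq> ball_SL \<delta>
   \<and> (\<forall>g\<in>SLn. \<forall>k1\<in>SOn. \<forall>k2\<in>SOn. H (k1 ** g ** k2) = H g)
   \<and> (\<forall>g\<in>SLn. \<forall>h\<in>SLn. g ** h = mat 1 \<longrightarrow> H h = H g)
   \<and> (\<forall>g. H g \<ge> 0)
   \<and> (\<integral>g. H g \<partial>\<mu>) = 1"

definition spherical_transform :: "('n::{finite,linorder}) sqmat measure \<Rightarrow> ('n sqmat \<Rightarrow> real)
     \<Rightarrow> (nat \<Rightarrow> complex) \<Rightarrow> complex" where
  "spherical_transform \<mu> H l = (\<integral>g. complex_of_real (H g) * phi l g \<partial>\<mu>)"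

definition LB :: "nat \<Rightarrow> real \<Rightarrow> (nat \<Rightarrow> complex) \<Rightarrow> real" where
  "LB n \<delta> l = 1 - 4 * (exp (real (n * (n + 6)) / 4 * \<delta>) - 1) / real (n * (n + 6))
      * (\<Sum>j\<in>{1..n}. cmod (l j + complex_of_real ((real n - 2 * real j + 1) / 2)))"

end

theory Submission
  imports Defs
begin


lemma mv_inner: fixes A :: "real^'n^'m" shows "(A *v x) \<bullet> y = x \<bullet> (transpose A *v y)"
  by (simp add: inner_vec_def matrix_vector_mult_def transpose_def sum_distrib_left sum_distrib_right
       mult_ac) (rule sum.swap)

lemma sym_inner: fixes S :: "real^'n^'n" assumes "transpose S = S"
  shows "(S *v x) \<bullet> y = x \<bullet> (S *v y)"
  using mv_inner[of S x y] assms by simp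

lemma eig_extend:
  fixes S :: "real^'n^'n" and B :: "(real^'n) set"
  assumes symm: "transpose S = S" and fin: "finite B"
    and nb: "\<forall>b\<in>B. norm b = 1" and ob: "pairwise orthogonal B"
    and eig: "\<forall>b\<in>B. \<exists>\<mu>. S *v b = \<mu> *\<^sub>R b"
    and card: "card B < CARD('n)"
  shows "\<exists>v. norm v = 1 \<and> (\<forall>b\<in>B. orthogonal v b) \<and> (\<exists>\<mu>. S *v v = \<mu> *\<^sub>R v)"
proof -
  define W where "W = {x::real^'n. \<forall>b\<in>B. x \<bullet> b = 0}"
  define q where "q x = x \<bullet> (S *v x)" for x :: "real^'n"
  have bb: "b \<bullet> b = 1" if "b \<in> B" for b using nb that by (simp add: norm_eq_1)
  have bo: "b \<bullet> c = 0" if "b \<in> B" "c \<in> B" "b \<noteq> c" for b c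
    using ob that unfolding pairwise_def orthogonal_def by blast
  have sumb: "(\<Sum>b\<in>B. (x \<bullet> b) * (b \<bullet> c)) = x \<bullet> c" if "c \<in> B" for x c
  proof -
    have "(\<Sum>b\<in>B. (x \<bullet> b) * (b \<bullet> c)) = (\<Sum>b\<in>B. if b = c then x \<bullet> c else 0)"
      by (rule sum.cong) (auto simp: bb that bo)
    also have "\<dots> = x \<bullet> c" using fin that by simp
    finally show ?thesis .
  qed
  have proj: "x - (\<Sum>b\<in>B. (x \<bullet> b) *\<^sub>R b) \<in> W" for x
    unfolding W_def by (auto simp: inner_diff_left inner_sum_left sumb)
  have Wsub: "subspace W" unfolding W_def subspace_def
    by (auto simp: inner_add_left)
  have "\<exists>x\<in>W. x \<noteq> 0"
  proof (rule ccontr)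
    assume "\<not> ?thesis"
    then have "x = (\<Sum>b\<in>B. (x \<bullet> b) *\<^sub>R b)" for x using proj[of x] by auto
    then have "UNIV \<subseteq> span B"
      by (metis (no_types, lifting) span_sum span_mul span_base subsetI)
    then have "dim (UNIV :: (real^'n) set) \<le> card B" using dim_le_card fin by blast
    then show False using card by (simp add: dim_UNIV)
  qed
  then obtain x0 where x0: "x0 \<in> W" "x0 \<noteq> 0" by blast
  define K where "K = W \<inter> sphere 0 1"
  have "x0 /\<^sub>R norm x0 \<in> K" using x0 Wsub unfolding K_def
    by (auto simp: subspace_scale)
  then have Kne: "K \<noteq> {}" by blast
  have Wcl: "closed W"
  proof -
    have "W = (\<Inter>b\<in>B. {x. b \<bullet> x = 0})" unfolding W_def by (auto simp: inner_commute)
    then show ?thesis by (auto intro: closed_hyperplane)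
  qed
  have Kc: "compact K" unfolding K_def by (simp add: Wcl closed_Int_compact)
  have qc: "continuous_on K q" unfolding q_def
    by (intro continuous_intros linear_continuous_on matrix_vector_mul_bounded_linear)
  obtain v where vK: "v \<in> K" and vmax: "\<forall>u\<in>K. q u \<le> q v"
    using continuous_attains_sup[OF Kc Kne qc] by blast
  have vW: "v \<in> W" and vn: "norm v = 1" using vK unfolding K_def by auto
  have vv: "v \<bullet> v = 1" using vn by (simp add: norm_eq_1)
  have qscale: "q (c *\<^sub>R x) = c^2 * q x" for c x
    unfolding q_def by (simp add: power2_eq_square matrix_vector_mult_scaleR)
  have key: "w \<bullet> (S *v v) = 0" if wW: "w \<in> W" and wv: "w \<bullet> v = 0" for w
  proof -
    define c where "c = w \<bullet> (S *v v)"
    define L where "L = q v * (w \<bullet> w) - q w"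
    have ineq: "2 * e * c \<le> e^2 * L" for e
    proof -
      define z where "z = v + e *\<^sub>R w"
      have zW: "z \<in> W" unfolding z_def using vW wW Wsub by (simp add: subspace_add subspace_scale)
      have nz: "z \<bullet> z = 1 + e^2 * (w \<bullet> w)" unfolding z_def
        using wv by (simp add: inner_add_left inner_add_right vv inner_commute[of v w] power2_eq_square)
      have zpos: "z \<bullet> z > 0" using nz by (simp add: add_pos_nonneg)
      then have z0: "norm z > 0" by (simp add: inner_gt_zero_iff)
      have "z /\<^sub>R norm z \<in> K" unfolding K_def using zW z0 Wsub
        by (auto simp: subspace_scale)
      then have "q (z /\<^sub>R norm z) \<le> q v" using vmax by blast
      then have "q z / (norm z)^2 \<le> q v" using qscale[of "inverse (norm z)" z]
        by (simp add: power_inverse divide_inverse mult.commute)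
      then have "q z \<le> q v * (z \<bullet> z)" using z0 by (simp add: divide_le_eq power2_norm_eq_inner)
      moreover have "q z = q v + 2 * e * c + e^2 * q w" unfolding q_def z_def c_def
        using sym_inner[OF symm, of w v] sym_inner[OF symm, of v w]
        by (simp add: inner_add_left inner_add_right matrix_vector_right_distrib matrix_vector_mult_scaleR
            inner_commute power2_eq_square algebra_simps)
      ultimately show ?thesis unfolding nz L_def by (simp add: algebra_simps)
    qed
    show "c = 0" unfolding c_def[symmetric]
    proof (rule ccontr)
      assume c0: "c \<noteq> 0"
      define e where "e = c / (\<bar>L\<bar> + 1)"
      have pos: "\<bar>L\<bar> + 1 > 0" by simp
      have ep: "e * (\<bar>L\<bar> + 1) = c" unfolding e_def using pos by simp
      have A: "2 * e * c * (\<bar>L\<bar> + 1)^2 = 2 * c^2 * (\<bar>L\<bar> + 1)"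
      proof -
        have "2 * e * c * (\<bar>L\<bar> + 1)^2 = 2 * c * (e * (\<bar>L\<bar> + 1)) * (\<bar>L\<bar> + 1)"
          by (simp add: power2_eq_square mult_ac)
        then show ?thesis by (simp add: ep power2_eq_square)
      qed
      have B: "e^2 * L * (\<bar>L\<bar> + 1)^2 = c^2 * L"
      proof -
        have "e^2 * L * (\<bar>L\<bar> + 1)^2 = (e * (\<bar>L\<bar> + 1))^2 * L"
          by (simp add: power2_eq_square mult_ac)
        then show ?thesis by (simp add: ep)
      qed
      have "2 * c^2 * (\<bar>L\<bar> + 1) \<le> c^2 * L"
        using mult_right_mono[OF ineq[of e], of "(\<bar>L\<bar> + 1)^2"] A B by simp
      moreover have "c^2 * L \<le> c^2 * \<bar>L\<bar>" by (simp add: mult_left_mono)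
      moreover have "c^2 > 0" using c0 by simp
      moreover have "2 * c^2 * (\<bar>L\<bar> + 1) = 2*(c^2*\<bar>L\<bar>) + 2*c^2" by (simp add: algebra_simps)
      moreover have "c^2*\<bar>L\<bar> \<ge> 0" by simp
      ultimately show False by linarith
    qed
  qed
  define \<mu> where "\<mu> = q v"
  define r where "r = S *v v - \<mu> *\<^sub>R v"
  have rx: "r \<bullet> x = 0" for x
  proof -
    define w where "w = x - (\<Sum>b\<in>B. (x \<bullet> b) *\<^sub>R b) - (x \<bullet> v) *\<^sub>R v"
    have vb: "v \<bullet> b = 0" if "b \<in> B" for b using vW that unfolding W_def by auto
    have wW: "w \<in> W" unfolding w_def using proj[of x] vW Wsub by (simp add: subspace_diff subspace_scale)
    have s0: "(\<Sum>b\<in>B. (x \<bullet> b) * (b \<bullet> v)) = 0" using vb by (simp add: inner_commute)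
    have wv: "w \<bullet> v = 0"
      by (simp only: w_def inner_diff_left inner_sum_left inner_scaleR_left s0) (simp add: vv)
    have rb: "r \<bullet> b = 0" if bB: "b \<in> B" for b
    proof -
      from eig bB obtain m where m: "S *v b = m *\<^sub>R b" by blast
      have "(S *v v) \<bullet> b = v \<bullet> (S *v b)" using mv_inner[of S v b] symm by simp
      then show ?thesis unfolding r_def using vb[OF bB] m by (simp add: inner_diff_left)
    qed
    have rv: "r \<bullet> v = 0" unfolding r_def \<mu>_def q_def
      by (simp only: inner_diff_left inner_scaleR_left vv inner_commute[of "S *v v" v])
    have "w \<bullet> r = 0" unfolding r_def using key[OF wW wv] wv by (simp add: inner_diff_right)
    then have rw: "r \<bullet> w = 0" by (simp add: inner_commute)
    have xeq: "x = w + (\<Sum>b\<in>B. (x \<bullet> b) *\<^sub>R b) + (x \<bullet> v) *\<^sub>R v" unfolding w_def by simp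
    have "r \<bullet> x = r \<bullet> w + (\<Sum>b\<in>B. (x \<bullet> b) * (r \<bullet> b)) + (x \<bullet> v) * (r \<bullet> v)"
      by (subst xeq) (simp only: inner_add_right inner_sum_right inner_scaleR_right)
    then show ?thesis using rb rv rw by simp
  qed
  have "r = 0" using rx[of r] by simp
  then have "S *v v = \<mu> *\<^sub>R v" unfolding r_def by simp
  moreover have "\<forall>b\<in>B. orthogonal v b" using vW unfolding W_def orthogonal_def by auto
  ultimately show ?thesis using vn by blast
qed

lemma eig_set_exists:
  fixes S :: "real^'n^'n"
  assumes symm: "transpose S = S"
  shows "k \<le> CARD('n) \<Longrightarrow> \<exists>B. finite B \<and> card B = k \<and> (\<forall>b\<in>B. norm b = 1) \<and> pairwise orthogonal B
      \<and> (\<forall>b\<in>B. \<exists>\<mu>. S *v b = \<mu> *\<^sub>R b)"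
proof (induction k)
  case 0
  then show ?case by (intro exI[of _ "{}"]) auto
next
  case (Suc k)
  then obtain B where B: "finite B" "card B = k" "\<forall>b\<in>B. norm b = 1" "pairwise orthogonal B"
      "\<forall>b\<in>B. \<exists>\<mu>. S *v b = \<mu> *\<^sub>R b" by auto
  obtain v where v: "norm v = 1" "\<forall>b\<in>B. orthogonal v b" "\<exists>\<mu>. S *v v = \<mu> *\<^sub>R v"
    using eig_extend[OF symm B(1) B(3) B(4) B(5)] B(2) Suc.prems by auto
  have vB: "v \<notin> B"
  proof
    assume "v \<in> B"
    then have "orthogonal v v" using v(2) by blast
    then show False using v(1) by (simp add: orthogonal_def)
  qed
  show ?case
  proof (intro exI[of _ "insert v B"] conjI)
    show "pairwise orthogonal (insert v B)"
      using B(4) v(2) by (auto simp: pairwise_insert orthogonal_commute)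
  qed (use B v vB in auto)
qed

lemma spectral:
  fixes S :: "real^'n^'n"
  assumes symm: "transpose S = S"
  shows "\<exists>Q. orthogonal_matrix Q \<and> (\<forall>j. \<exists>\<mu>. S *v column j Q = \<mu> *\<^sub>R column j Q)"
proof -
  obtain B where B: "finite B" "card B = CARD('n)" "\<forall>b\<in>B. norm b = 1" "pairwise orthogonal B"
      "\<forall>b\<in>B. \<exists>\<mu>. S *v b = \<mu> *\<^sub>R b"
    using eig_set_exists[OF symm, of "CARD('n)"] by auto
  obtain f where f: "bij_betw f (UNIV::'n set) B"
    using finite_same_card_bij[of "UNIV::'n set" B] B(1,2) by auto
  define Q :: "real^'n^'n" where "Q = (\<chi> i j. f j $ i)"
  have col: "column j Q = f j" for j unfolding Q_def column_def by (simp add: vec_eq_iff)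
  have fB: "f j \<in> B" for j using f by (auto simp: bij_betw_def)
  have finj: "f i \<noteq> f j" if "i \<noteq> j" for i j using f that by (auto simp: bij_betw_def inj_on_def)
  have "orthogonal_matrix Q" unfolding orthogonal_matrix_orthonormal_columns col
    using B(3,4) fB finj by (auto simp: pairwise_def)
  then show ?thesis using B(5) fB col by metis
qed


definition diagm :: "('n::finite \<Rightarrow> real) \<Rightarrow> real^'n^'n" where
  "diagm d = (\<chi> i j. if i = j then d i else 0)"

lemma diagm_nth[simp]: "diagm d $ i $ j = (if i = j then d i else 0)"
  by (simp add: diagm_def)

lemma column_mult: "column j (A ** B) = A *v column j B"
  by (simp add: column_def matrix_matrix_mult_def matrix_vector_mult_def vec_eq_iff)

lemma column_mult_diagm: "column j (A ** diagm d) = d j *\<^sub>R column j A"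
  by (simp add: column_def matrix_matrix_mult_def vec_eq_iff if_distrib mult.commute cong: if_cong)

lemma diagm_mult: "diagm d ** diagm e = diagm (\<lambda>i. d i * e i)"
proof -
  have "(\<Sum>k\<in>UNIV. diagm d $ i $ k * diagm e $ k $ j) = diagm (\<lambda>i. d i * e i) $ i $ j" for i j
  proof -
    have "(\<Sum>k\<in>UNIV. diagm d $ i $ k * diagm e $ k $ j)
        = (\<Sum>k\<in>UNIV. if k = i then d i * diagm e $ i $ j else 0)"
      by (rule sum.cong) auto
    then show ?thesis by simp
  qed
  then show ?thesis by (simp add: matrix_matrix_mult_def vec_eq_iff)
qed

lemma det_diagm: "det (diagm d) = prod d UNIV"
  by (simp add: det_diagonal)

lemma diagm_one: "diagm (\<lambda>i. 1) = mat 1"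
  by (simp add: vec_eq_iff mat_def)

lemma transpose_diagm: "transpose (diagm d) = diagm d"
  by (simp add: transpose_def vec_eq_iff)

lemma mv_zero_imp: fixes g :: "real^'n^'n" assumes "det g \<noteq> 0" "g *v x = 0" shows "x = 0"
proof -
  obtain g' where "g' ** g = mat 1" using assms(1) invertible_det_nz[of g] by (auto simp: invertible_def)
  then have "x = g' *v (g *v x)" by (simp add: matrix_vector_mul_assoc)
  then show ?thesis using assms(2) by simp
qed

lemma spectral_rot:
  fixes S :: "real^'n^'n"
  assumes symm: "transpose S = S"
  shows "\<exists>Q. rotation_matrix Q \<and> (\<forall>j. \<exists>\<mu>. S *v column j Q = \<mu> *\<^sub>R column j Q)"
proof -
  obtain Q where Q: "orthogonal_matrix Q" "\<forall>j. \<exists>\<mu>. S *v column j Q = \<mu> *\<^sub>R column j Q"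
    using spectral[OF symm] by blast
  show ?thesis
  proof (cases "det Q = 1")
    case True then show ?thesis using Q by (auto simp: rotation_matrix_def)
  next
    case False
    then have dQ: "det Q = -1" using det_orthogonal_matrix[OF Q(1)] by auto
    obtain j0 :: 'n where True by simp
    define d where "d i = (if i = j0 then -1 else 1::real)" for i
    define Q' where "Q' = Q ** diagm d"
    have "orthogonal_matrix (diagm d)"
      unfolding orthogonal_matrix transpose_diagm diagm_mult
      by (simp add: d_def vec_eq_iff mat_def)
    then have oQ': "orthogonal_matrix Q'" unfolding Q'_def using Q(1) orthogonal_matrix_mul by blast
    have "prod d UNIV = -1"
    proof -
      have "prod d UNIV = d j0 * prod d (UNIV - {j0})" by (simp add: prod.remove)
      also have "prod d (UNIV - {j0}) = 1" by (rule prod.neutral) (simp add: d_def)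
      finally show ?thesis by (simp add: d_def)
    qed
    then have "det Q' = 1" unfolding Q'_def det_mul det_diagm dQ by simp
    moreover have "\<exists>\<mu>. S *v column j Q' = \<mu> *\<^sub>R column j Q'" for j
    proof -
      obtain \<mu> where "S *v column j Q = \<mu> *\<^sub>R column j Q" using Q(2) by blast
      then show ?thesis unfolding Q'_def column_mult_diagm
        by (intro exI[of _ \<mu>]) (simp add: matrix_vector_mult_scaleR)
    qed
    ultimately show ?thesis using oQ' by (auto simp: rotation_matrix_def)
  qed
qed

lemma svd_exists:
  fixes g :: "real^'n^'n"
  assumes dg: "det g = 1"
  shows "\<exists>\<xi>1 \<xi>2 a. \<xi>1 \<in> SOn \<and> \<xi>2 \<in> SOn \<and> g = \<xi>1 ** exp_diag a ** \<xi>2"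
proof -
  define S where "S = transpose g ** g"
  have symm: "transpose S = S" unfolding S_def by (simp add: matrix_transpose_mul)
  obtain Q where Q: "rotation_matrix Q" "\<forall>j. \<exists>\<mu>. S *v column j Q = \<mu> *\<^sub>R column j Q"
    using spectral_rot[OF symm] by blast
  have oQ: "orthogonal_matrix Q" using Q(1) by (simp add: rotation_matrix_def)
  obtain lam where lam: "\<And>j. S *v column j Q = lam j *\<^sub>R column j Q"
    using Q(2) by metis
  have cn: "column i Q \<bullet> column j Q = (if i = j then 1 else 0)" for i j
    using oQ unfolding orthogonal_matrix_orthonormal_columns
    by (auto simp: orthogonal_def norm_eq_1)
  have gip: "(g *v column i Q) \<bullet> (g *v column j Q) = (if i = j then lam j else 0)" for i j
  proof -
    have "(g *v column i Q) \<bullet> (g *v column j Q) = column i Q \<bullet> (S *v column j Q)"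
      unfolding S_def by (simp add: mv_inner matrix_vector_mul_assoc)
    then show ?thesis using lam[of j] cn[of i j] by simp
  qed
  have lpos: "lam j > 0" for j
  proof -
    have "column j Q \<noteq> 0" using cn[of j j] by auto
    then have "g *v column j Q \<noteq> 0" using mv_zero_imp[of g] dg by auto
    then show ?thesis using gip[of j j] by (metis inner_gt_zero_iff)
  qed
  define sg where "sg j = sqrt (lam j)" for j
  have sgpos: "sg j > 0" for j using lpos by (simp add: sg_def)
  define U where "U = g ** Q ** diagm (\<lambda>j. 1 / sg j)"
  have colU: "column j U = (1 / sg j) *\<^sub>R (g *v column j Q)" for j
    unfolding U_def by (subst column_mult_diagm) (simp only: column_mult)
  have oU: "orthogonal_matrix U"
    unfolding orthogonal_matrix_orthonormal_columns
  proof (intro conjI allI impI)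
    fix i
    have "column i U \<bullet> column i U = 1" unfolding colU using gip[of i i] lpos[of i] sgpos[of i]
      by (simp add: sg_def)
    then show "norm (column i U) = 1" by (simp add: norm_eq_1)
  next
    fix i j :: 'n assume "i \<noteq> j"
    then show "orthogonal (column i U) (column j U)" unfolding colU orthogonal_def
      using gip[of i j] by simp
  qed
  have DD: "diagm (\<lambda>j. 1 / sg j) ** diagm sg = mat 1"
    unfolding diagm_mult diagm_one[symmetric] using sgpos by (simp add: less_imp_neq[symmetric])
  have UD: "U ** diagm sg = g ** Q"
    unfolding U_def by (simp add: matrix_mul_assoc[symmetric] DD matrix_mul_rid)
  have geq: "g = U ** diagm sg ** transpose Q"
    unfolding UD using oQ by (simp add: orthogonal_matrix_def matrix_mul_rid matrix_mul_assoc[symmetric])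
  have "det U = 1"
  proof -
    have "det U = prod (\<lambda>j. 1 / sg j) UNIV"
      unfolding U_def det_mul det_diagm dg using Q(1) by (simp add: rotation_matrix_def)
    moreover have "prod (\<lambda>j. 1 / sg j) UNIV > 0" using sgpos by (simp add: prod_pos)
    ultimately show ?thesis using det_orthogonal_matrix[OF oU] by auto
  qed
  then have U1: "U \<in> SOn" using oU by (simp add: SOn_def rotation_matrix_def)
  have Q1: "transpose Q \<in> SOn" using Q(1) by (simp add: SOn_def rotation_matrix_def det_transpose)
  have "exp_diag (\<chi> j. ln (sg j)) = diagm sg"
    using sgpos by (simp add: exp_diag_def vec_eq_iff)
  then show ?thesis using U1 Q1 geq by metis
qed


lemma perm_ge_id:
  fixes p :: "'n::{finite,linorder} \<Rightarrow> 'n"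
  assumes p: "p permutes UNIV" and ge: "\<forall>i. i \<le> p i"
  shows "p = id"
proof (rule ccontr)
  assume "p \<noteq> id"
  then have ne: "{i. p i \<noteq> i} \<noteq> {}" by (auto simp: fun_eq_iff)
  define m where "m = Max {i. p i \<noteq> i}"
  have mD: "p m \<noteq> m" using Max_in[OF _ ne] unfolding m_def by auto
  then have "m < p m" using ge le_neq_trans by (metis order.order_iff_strict)
  have "p (p m) \<noteq> p m" using mD p by (metis permutes_inj injD)
  then have "p m \<le> m" unfolding m_def by (intro Max_ge) auto
  then show False using \<open>m < p m\<close> by simp
qed

lemma det_upper:
  fixes A :: "'a::comm_ring_1^('n::{finite,linorder})^('n::{finite,linorder})"
  assumes ld: "\<And>i j. j < i \<Longrightarrow> A$i$j = 0"
  shows "det A = prod (\<lambda>i. A$i$i) (UNIV:: 'n set)"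
proof -
  let ?U = "UNIV:: 'n set"
  let ?PU = "{p. p permutes ?U}"
  let ?pp = "(\<lambda>p. of_int (sign p) * prod (\<lambda>i. A$i$p i) (UNIV :: 'n set))"
  have fU: "finite ?U"
    by simp
  have id0: "{id} \<subseteq> ?PU"
    by (auto simp: permutes_id)
  have p0: "\<forall>p \<in> ?PU -{id}. ?pp p = 0"
  proof
    fix p
    assume p: "p \<in> ?PU - {id}"
    then obtain i where i: "p i < i"
      using perm_ge_id[of p] by (metis DiffE mem_Collect_eq not_le singletonI)
    from ld[OF i] have "\<exists>i \<in> ?U. A$i$p i = 0"
      by blast
    with prod_zero[OF fU]  show "?pp p = 0"
      by force
  qed
  from sum.mono_neutral_cong_left[OF finite_permutations[OF fU] id0 p0] show ?thesis
    unfolding det_def by (simp add: sign_id)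
qed


lemma mult_transpose_nth: "(A ** transpose B) $ i $ j = row i A \<bullet> row j B"
  for A B :: "real^'n^'m"
  by (simp add: matrix_matrix_mult_def transpose_def row_def inner_vec_def mult.commute)

lemma rq_exists:
  fixes g :: "real^('n::{finite,linorder})^('n::{finite,linorder})"
  assumes dg: "det g = 1"
  shows "\<exists>x d \<xi>. upper_unipotent x \<and> \<xi> \<in> SOn \<and> (\<forall>i. d i > 0) \<and> g = x ** diagm d ** \<xi>"
proof -
  define Sp where "Sp i = span ((\<lambda>j. row j g) ` {j. i < j})" for i
  have "\<forall>i. \<exists>u. row i g - u \<in> Sp i \<and> (\<forall>w\<in>Sp i. orthogonal u w)"
  proof
    fix i
    obtain y z where "y \<in> Sp i" "\<And>w. w \<in> Sp i \<Longrightarrow> orthogonal z w" "row i g = y + z"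
      using orthogonal_subspace_decomp_exists[of "(\<lambda>j. row j g) ` {j. i < j}" "row i g"]
      unfolding Sp_def by metis
    then show "\<exists>u. row i g - u \<in> Sp i \<and> (\<forall>w\<in>Sp i. orthogonal u w)"
      by (intro exI[of _ z]) auto
  qed
  then obtain u where u1: "\<And>i. row i g - u i \<in> Sp i" and u2: "\<And>i w. w \<in> Sp i \<Longrightarrow> orthogonal (u i) w"
    by metis
  have rowSp: "row j g \<in> Sp i" if "i < j" for i j
    unfolding Sp_def using that by (intro span_base) auto
  have SpSp: "Sp j \<subseteq> Sp i" if "i < j" for i j
    unfolding Sp_def using that by (intro span_mono) auto
  have uSp: "u j \<in> Sp i" if "i < j" for i j
  proof -
    have "u j = row j g - (row j g - u j)" by simp
    moreover have "row j g - u j \<in> Sp i" using u1[of j] SpSp[OF that] by blast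
    ultimately show ?thesis using rowSp[OF that] by (metis span_diff Sp_def)
  qed
  have u0: "u i \<noteq> 0" for i
  proof
    assume "u i = 0"
    then have ri: "row i g \<in> Sp i" using u1[of i] by simp
    have "det g = 0"
    proof (cases "\<exists>j. i < j \<and> row j g = row i g")
      case True
      then obtain j where "i < j" "row j g = row i g" by blast
      then show ?thesis using det_identical_rows[of i j g] by auto
    next
      case False
      then have "(\<lambda>j. row j g) ` {j. i < j} \<subseteq> rows g - {row i g}"
        by (auto simp: rows_def)
      then have "row i g \<in> span (rows g - {row i g})" using ri unfolding Sp_def
        by (meson span_mono subsetD)
      moreover have "row i g \<in> rows g" by (auto simp: rows_def)
      ultimately have "dependent (rows g)" unfolding dependent_def by blast
      then show ?thesis by (simp add: det_dependent_rows dependent_vec_eq)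
    qed
    then show False using dg by simp
  qed
  have uorth: "u i \<bullet> u j = 0" if "i \<noteq> j" for i j
  proof (cases "i < j")
    case True then show ?thesis using u2[OF uSp[OF True]] by (simp add: orthogonal_def)
  next
    case False
    then have "j < i" using that by simp
    then show ?thesis using u2[OF uSp[of j i]] by (simp add: orthogonal_def inner_commute)
  qed
  define \<xi> where "\<xi> = (\<chi> i. u i /\<^sub>R norm (u i))"
  have rowxi: "row i \<xi> = u i /\<^sub>R norm (u i)" for i unfolding \<xi>_def row_def by (simp add: vec_eq_iff)
  have oxi: "orthogonal_matrix \<xi>" unfolding orthogonal_matrix_orthonormal_rows rowxi
    using u0 uorth by (auto simp: orthogonal_def)
  define T0 where "T0 = g ** transpose \<xi>"
  have T0nth: "T0 $ i $ j = (row i g \<bullet> u j) / norm (u j)" for i j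
    unfolding T0_def mult_transpose_nth rowxi by (simp add: divide_inverse mult.commute)
  have T0low: "T0 $ i $ j = 0" if "j < i" for i j
    unfolding T0nth using u2[OF rowSp[OF that]] by (simp add: orthogonal_def inner_commute)
  have T0diag: "T0 $ i $ i = norm (u i)" for i
  proof -
    have "row i g \<bullet> u i = (row i g - u i) \<bullet> u i + u i \<bullet> u i" by (simp add: inner_diff_left)
    also have "(row i g - u i) \<bullet> u i = 0" using u2[OF u1[of i]] by (simp add: orthogonal_def inner_commute)
    finally show ?thesis unfolding T0nth using u0[of i] by (simp add: power2_norm_eq_inner[symmetric] power2_eq_square)
  qed
  have gT: "g = T0 ** \<xi>" unfolding T0_def using oxi
    by (simp add: orthogonal_matrix_def matrix_mul_assoc[symmetric] matrix_mul_rid)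
  define d where "d i = T0 $ i $ i" for i
  have dpos: "d i > 0" for i unfolding d_def T0diag using u0 by simp
  define x where "x = (\<chi> i j. T0 $ i $ j / d j)"
  have xd: "x ** diagm d = T0"
  proof -
    have "(\<Sum>k\<in>UNIV. x $ i $ k * diagm d $ k $ j) = T0 $ i $ j" for i j
    proof -
      have "(\<Sum>k\<in>UNIV. x $ i $ k * diagm d $ k $ j) = (\<Sum>k\<in>UNIV. if k = j then x $ i $ j * d j else 0)"
        by (rule sum.cong) auto
      also have "\<dots> = T0 $ i $ j" unfolding x_def using dpos[of j] by simp
      finally show ?thesis .
    qed
    then show ?thesis by (simp add: matrix_matrix_mult_def vec_eq_iff)
  qed
  have ux: "upper_unipotent x" unfolding upper_unipotent_def x_def
    using T0low dpos by (auto simp: d_def less_imp_neq[symmetric])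
  have detx: "det x = 1"
  proof -
    have "det x = prod (\<lambda>i. x$i$i) UNIV" by (rule det_upper) (use ux in \<open>simp add: upper_unipotent_def\<close>)
    then show ?thesis using ux by (simp add: upper_unipotent_def)
  qed
  have geq: "g = x ** diagm d ** \<xi>" using gT xd by simp
  have "1 = prod d UNIV * det \<xi>" using dg unfolding geq det_mul detx det_diagm by simp
  moreover have "prod d UNIV > 0" using dpos by (simp add: prod_pos)
  ultimately have "det \<xi> = 1" using det_orthogonal_matrix[OF oxi] by auto
  then have "\<xi> \<in> SOn" using oxi by (simp add: SOn_def rotation_matrix_def)
  then show ?thesis using ux dpos geq by blast
qed


lemma pos_mono: fixes i j :: "'n::{finite,linorder}" assumes "i < j" shows "pos i < pos j"
proof -
  have "{k. k < i} \<subset> {k. k < j}" using assms by auto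
  then show ?thesis unfolding pos_def by (intro psubset_card_mono) auto
qed

lemma pos_less: fixes i :: "'n::{finite,linorder}" shows "pos i < CARD('n)"
proof -
  have "{k. k < i} \<subset> UNIV" by auto
  then show ?thesis unfolding pos_def by (intro psubset_card_mono) auto
qed

lemma pos_inj: "inj (pos :: 'n::{finite,linorder} \<Rightarrow> nat)"
  by (metis injI linorder_neqE_nat not_less_iff_gr_or_eq pos_mono)

lemma pos_bij: "bij_betw (pos :: 'n::{finite,linorder} \<Rightarrow> nat) UNIV {..<CARD('n)}"
proof -
  have sub: "pos ` (UNIV::'n set) \<subseteq> {..<CARD('n)}" using pos_less by auto
  have "card (pos ` (UNIV::'n set)) = CARD('n)" using card_image[OF pos_inj] by simp
  then have "pos ` (UNIV::'n set) = {..<CARD('n)}" using sub by (intro card_subset_eq) auto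
  then show ?thesis using pos_inj by (simp add: bij_betw_def)
qed

definition ep :: "nat \<Rightarrow> 'n::{finite,linorder}" where "ep p = inv pos p"

lemma ep_pos[simp]: "ep (pos i) = i"
  unfolding ep_def by (rule inv_f_f[OF pos_inj])

lemma pos_ep[simp]: "p < CARD('n::{finite,linorder}) \<Longrightarrow> pos (ep p :: 'n) = p"
  unfolding ep_def using pos_bij[where 'n='n] by (metis bij_betw_inv_into_right lessThan_iff)

lemma prod_pos_reindex: "(\<Prod>p<CARD('n::{finite,linorder}). f (ep p :: 'n)) = prod f UNIV"
  using prod.reindex_bij_betw[OF pos_bij[where 'n='n], of "\<lambda>p. f (ep p)"] by simp

lemma sum_pos_reindex: "(\<Sum>p<CARD('n::{finite,linorder}). f (ep p :: 'n)) = sum f UNIV"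
  using sum.reindex_bij_betw[OF pos_bij[where 'n='n], of "\<lambda>p. f (ep p)"] by simp

lemma prodswap:
  fixes f :: "nat \<Rightarrow> real"
  shows "(\<Prod>j\<in>{1..N-1}. f j ^ (N - j)) = (\<Prod>p<N. \<Prod>k\<in>{1..N-1-p}. f k)"
proof (induction N)
  case 0 then show ?case by simp
next
  case (Suc N)
  have "(\<Prod>p<Suc N. \<Prod>k\<in>{1..Suc N-1-p}. f k) = (\<Prod>k\<in>{1..N}. f k) * (\<Prod>p<N. \<Prod>k\<in>{1..N-1-p}. f k)"
    by (subst prod.lessThan_Suc_shift) simp
  also have "\<dots> = (\<Prod>k\<in>{1..N}. f k) * (\<Prod>j\<in>{1..N-1}. f j ^ (N - j))" using Suc.IH by simp
  also have "(\<Prod>j\<in>{1..N-1}. f j ^ (N - j)) = (\<Prod>j\<in>{1..N}. f j ^ (N - j))"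
  proof (cases N)
    case 0 then show ?thesis by simp
  next
    case (Suc M)
    then have "{1..N} = insert N {1..N-1}" by auto
    then show ?thesis using Suc by simp
  qed
  also have "(\<Prod>k\<in>{1..N}. f k) * (\<Prod>j\<in>{1..N}. f j ^ (N - j)) = (\<Prod>j\<in>{1..N}. f j ^ (Suc N - j))"
    by (subst prod.distrib[symmetric]) (rule prod.cong, auto simp: Suc_diff_le)
  finally show ?case by simp
qed

lemma prod_tele:
  fixes D :: "nat \<Rightarrow> real" and N :: nat and y :: "nat \<Rightarrow> real"
  assumes Dpos: "\<And>p. p < N \<Longrightarrow> D p > 0" and N1: "N \<ge> 1"
    and y: "\<And>k. k \<in> {1..N-1} \<Longrightarrow> y k = D (N-1-k) / D (N-k)"
  shows "m \<le> N - 1 \<Longrightarrow> (\<Prod>k\<in>{1..m}. y k) = D (N-1-m) / D (N-1)"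
proof (induction m)
  case 0
  show ?case using Dpos[of "N-1"] N1 by auto
next
  case (Suc m)
  have "{1..Suc m} = insert (Suc m) {1..m}" by auto
  then have "(\<Prod>k\<in>{1..Suc m}. y k) = y (Suc m) * (\<Prod>k\<in>{1..m}. y k)" by simp
  also have "(\<Prod>k\<in>{1..m}. y k) = D (N-1-m) / D (N-1)" using Suc by simp
  also have "y (Suc m) = D (N - 1 - Suc m) / D (N - 1 - m)"
  proof -
    have "Suc m \<in> {1..N-1}" using Suc.prems by simp
    moreover have "N - Suc m = N - 1 - m" by simp
    ultimately show ?thesis using y by metis
  qed
  also have "D (N - 1 - Suc m) / D (N - 1 - m) * (D (N-1-m) / D (N-1)) = D (N - 1 - Suc m) / D (N - 1)"
  proof -
    have "D (N-1-m) \<noteq> 0" using Dpos[of "N-1-m"] N1 by simp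
    then show ?thesis by simp
  qed
  finally show ?case .
qed


lemma amat_exists:
  fixes d :: "'n::{finite,linorder} \<Rightarrow> real"
  assumes dpos: "\<And>i. d i > 0" and dprod: "prod d UNIV = 1"
  shows "\<exists>y. (\<forall>j\<in>{1..CARD('n)-1}. y j > 0) \<and> (\<forall>j. j \<notin> {1..CARD('n)-1} \<longrightarrow> y j = 1)
           \<and> a_mat y = diagm d"
proof -
  define N where "N = CARD('n)"
  have N1: "N \<ge> 1" unfolding N_def by (simp add: Suc_leI)
  define D where "D p = d (ep p :: 'n)" for p
  have Dpos: "D p > 0" for p unfolding D_def using dpos by simp
  define y where "y k = (if k \<in> {1..N-1} then D (N-1-k) / D (N-k) else 1)" for k
  have ypos: "\<forall>j\<in>{1..N-1}. y j > 0" unfolding y_def using Dpos by simp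
  have y1: "\<forall>j. j \<notin> {1..N-1} \<longrightarrow> y j = 1" unfolding y_def by simp
  have P: "(\<Prod>k\<in>{1..m}. y k) = D (N-1-m) / D (N-1)" if "m \<le> N - 1" for m
    by (rule prod_tele[OF _ N1 _ that]) (auto simp: Dpos y_def)
  have PD: "(\<Prod>p<N. D p) = 1" unfolding D_def N_def using dprod prod_pos_reindex[of d] by simp
  have "(\<Prod>j\<in>{1..N-1}. y j ^ (N - j)) = (\<Prod>p<N. \<Prod>k\<in>{1..N-1-p}. y k)" by (rule prodswap)
  also have "\<dots> = (\<Prod>p<N. D p / D (N-1))"
  proof (rule prod.cong)
    fix p assume "p \<in> {..<N}"
    then have "N-1-(N-1-p) = p" by auto
    then show "(\<Prod>k\<in>{1..N-1-p}. y k) = D p / D (N-1)" using P[of "N-1-p"] by simp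
  qed simp
  also have "\<dots> = (\<Prod>p<N. D p) / D (N-1) ^ N" by (simp add: prod_dividef)
  also have "\<dots> = 1 / D (N-1) ^ N" using PD by simp
  finally have pr: "(\<Prod>j\<in>{1..N-1}. y j ^ (N - j)) = 1 / D (N-1) ^ N" .
  have c: "(\<Prod>j\<in>{1..N-1}. y j ^ (N - j)) powr (-1 / real N) = D (N-1)"
  proof -
    have a: "D (N-1) > 0" by (rule Dpos)
    have "1 / D (N-1) ^ N = D (N-1) powr (- real N)"
      using a by (simp add: powr_minus powr_realpow divide_inverse)
    then have "(1 / D (N-1) ^ N) powr (-1 / real N) = D (N-1) powr (- real N * (-1 / real N))"
      by (simp add: powr_powr)
    also have "- real N * (-1 / real N) = 1" using N1 by simp
    finally show ?thesis using pr a by simp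
  qed
  have "a_mat y = diagm d"
  proof -
    have "a_mat y $ i $ i = d i" for i
    proof -
      have pl: "pos i \<le> N - 1" using pos_less[of i] unfolding N_def by simp
      have "a_mat y $ i $ i = D (N-1) * (\<Prod>k\<in>{1..N - 1 - pos i}. y k)"
        unfolding a_mat_def using c unfolding N_def by simp
      also have "\<dots> = D (N-1) * (D (N-1-(N-1-pos i)) / D (N-1))" using P[of "N-1-pos i"] by simp
      also have "N-1-(N-1-pos i) = pos i" using pl by simp
      also have "D (N-1) * (D (pos i) / D (N-1)) = D (pos i)" using Dpos[of "N-1"] by simp
      finally show ?thesis unfolding D_def by simp
    qed
    then show ?thesis unfolding vec_eq_iff by (auto simp: a_mat_def)
  qed
  then show ?thesis using ypos y1 unfolding N_def by blast
qed


lemma upper_det: assumes "upper_unipotent x" shows "det x = 1"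
proof -
  have "det x = prod (\<lambda>i. x$i$i) UNIV" by (rule det_upper) (use assms in \<open>simp add: upper_unipotent_def\<close>)
  then show ?thesis using assms by (simp add: upper_unipotent_def)
qed

lemma iwasawa_prop:
  fixes g :: "real^('n::{finite,linorder})^('n::{finite,linorder})"
  assumes dg: "det g = 1"
  shows "(\<forall>j\<in>{1..CARD('n)-1}. iwasawa_y g j > 0) \<and> (\<forall>j. j \<notin> {1..CARD('n)-1} \<longrightarrow> iwasawa_y g j = 1)
       \<and> (\<exists>x \<xi>. upper_unipotent x \<and> \<xi> \<in> SOn \<and> g = x ** (a_mat (iwasawa_y g) :: 'n sqmat) ** \<xi>)"
proof -
  obtain x d \<xi> where xd: "upper_unipotent x" "\<xi> \<in> SOn" "\<forall>i. d i > 0" "g = x ** diagm d ** \<xi>"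
    using rq_exists[OF dg] by blast
  have "1 = prod d UNIV" using dg xd(2) unfolding xd(4) det_mul upper_det[OF xd(1)] det_diagm
    by (simp add: SOn_def rotation_matrix_def)
  then obtain y where y: "(\<forall>j\<in>{1..CARD('n)-1}. y j > 0)" "(\<forall>j. j \<notin> {1..CARD('n)-1} \<longrightarrow> y j = 1)"
      "a_mat y = diagm d"
    using amat_exists[of d] xd(3) by metis
  have "\<exists>y. (\<forall>j\<in>{1..CARD('n)-1}. y j > 0) \<and> (\<forall>j. j \<notin> {1..CARD('n)-1} \<longrightarrow> y j = 1)
       \<and> (\<exists>x \<xi>. upper_unipotent x \<and> \<xi> \<in> SOn \<and> g = x ** (a_mat y :: 'n sqmat) ** \<xi>)"
    using y xd by metis
  then show ?thesis unfolding iwasawa_y_def by (rule someI_ex)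
qed

lemma polar_prop:
  fixes g :: "real^'n^'n"
  assumes dg: "det g = 1"
  shows "\<exists>\<xi>1 \<xi>2 a. \<xi>1 \<in> SOn \<and> \<xi>2 \<in> SOn \<and> g = \<xi>1 ** exp_diag a ** \<xi>2 \<and> polar_height g = norm a"
proof -
  have "\<exists>r. \<exists>\<xi>1 \<xi>2 a. \<xi>1 \<in> SOn \<and> \<xi>2 \<in> SOn \<and> g = \<xi>1 ** exp_diag a ** \<xi>2 \<and> r = norm a"
    using svd_exists[OF dg] by blast
  then have "\<exists>\<xi>1 \<xi>2 a. \<xi>1 \<in> SOn \<and> \<xi>2 \<in> SOn \<and> g = \<xi>1 ** exp_diag a ** \<xi>2 \<and> polar_height g = norm a"
    unfolding polar_height_def by (rule someI_ex)
  then show ?thesis .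
qed


lemma orth_norm: fixes Q :: "real^'n^'n" assumes "orthogonal_matrix Q" shows "norm (Q *v x) = norm x"
proof -
  have "(Q *v x) \<bullet> (Q *v x) = x \<bullet> x"
    using assms by (simp add: mv_inner matrix_vector_mul_assoc orthogonal_matrix_def)
  then show ?thesis by (metis norm_eq_sqrt_inner)
qed

lemma norm_sq_sum: "(norm (x::real^'n))^2 = (\<Sum>k\<in>UNIV. (x$k)^2)"
  unfolding power2_norm_eq_inner inner_vec_def by (simp add: power2_eq_square)

lemma diagm_mv_nth: "(diagm d *v z) $ k = d k * z $ k"
proof -
  have "(\<Sum>j\<in>UNIV. diagm d $ k $ j * z $ j) = (\<Sum>j\<in>UNIV. if j = k then d k * z $ k else 0)"
    by (rule sum.cong) auto
  then show ?thesis by (simp add: matrix_vector_mult_def)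
qed

lemma diagm_norm_bounds:
  assumes lo: "\<And>k. 0 \<le> m \<and> m \<le> \<bar>d k\<bar>" and hi: "\<And>k. \<bar>d k\<bar> \<le> M"
  shows "m * norm z \<le> norm (diagm d *v z)" "norm (diagm d *v z) \<le> M * norm z"
proof -
  have m0: "m \<ge> 0" using lo by blast
  have M0: "M \<ge> 0" using hi[of undefined] by linarith
  have "(norm (diagm d *v z))^2 = (\<Sum>k\<in>UNIV. (d k)^2 * (z$k)^2)"
    unfolding norm_sq_sum diagm_mv_nth by (simp add: power_mult_distrib)
  note eq = this
  have "(m * norm z)^2 = (\<Sum>k\<in>UNIV. m^2 * (z$k)^2)"
    by (simp add: power_mult_distrib norm_sq_sum sum_distrib_left)
  also have "\<dots> \<le> (\<Sum>k\<in>UNIV. (d k)^2 * (z$k)^2)"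
  proof (rule sum_mono)
    fix k
    have "m^2 \<le> (d k)^2" using lo[of k] by (metis abs_le_square_iff abs_of_nonneg)
    then show "m^2 * (z$k)^2 \<le> (d k)^2 * (z$k)^2" by (simp add: mult_right_mono)
  qed
  finally have "(m * norm z)^2 \<le> (norm (diagm d *v z))^2" using eq by simp
  then show "m * norm z \<le> norm (diagm d *v z)"
    using m0 by (meson norm_ge_zero power2_le_imp_le)
  have "(\<Sum>k\<in>UNIV. (d k)^2 * (z$k)^2) \<le> (\<Sum>k\<in>UNIV. M^2 * (z$k)^2)"
  proof (rule sum_mono)
    fix k
    have "(d k)^2 \<le> M^2" using hi[of k] by (metis abs_le_square_iff abs_of_nonneg M0)
    then show "(d k)^2 * (z$k)^2 \<le> M^2 * (z$k)^2" by (simp add: mult_right_mono)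
  qed
  also have "\<dots> = (M * norm z)^2"
    by (simp add: power_mult_distrib norm_sq_sum sum_distrib_left)
  finally have "(norm (diagm d *v z))^2 \<le> (M * norm z)^2" using eq by simp
  then show "norm (diagm d *v z) \<le> M * norm z"
    using M0 by (meson norm_ge_zero mult_nonneg_nonneg power2_le_imp_le)
qed

lemma exp_diag_diagm: "exp_diag a = diagm (\<lambda>k. exp (a $ k))"
  by (simp add: exp_diag_def diagm_def)

lemma exp_diag_bounds:
  shows "exp (- norm a) * norm z \<le> norm (exp_diag a *v z)" "norm (exp_diag a *v z) \<le> exp (norm a) * norm z"
proof -
  have b: "exp (- norm a) \<le> exp (a $ k)" "exp (a $ k) \<le> exp (norm a)" for k
    using component_le_norm_cart[of a k] by auto
  show "exp (- norm a) * norm z \<le> norm (exp_diag a *v z)" unfolding exp_diag_diagm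
    by (rule diagm_norm_bounds(1)[where M="exp (norm a)"]) (use b in auto)
  show "norm (exp_diag a *v z) \<le> exp (norm a) * norm z" unfolding exp_diag_diagm
    by (rule diagm_norm_bounds(2)[where m="exp (- norm a)"]) (use b in auto)
qed


definition Wset :: "'n::{finite,linorder} \<Rightarrow> (real^('n::{finite,linorder})) set" where
  "Wset i = {w. w $ i = 1 \<and> (\<forall>j<i. w $ j = 0)}"

definition ainf :: "real^('n::{finite,linorder})^('n::{finite,linorder}) \<Rightarrow> ('n::{finite,linorder}) \<Rightarrow> real" where
  "ainf g i = Inf ((\<lambda>w. norm (transpose g *v w)) ` Wset i)"

lemma xt_nth:
  assumes ux: "upper_unipotent x" and w: "\<forall>k<j. w $ k = 0"
  shows "(transpose x *v w) $ j = w $ j"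
proof -
  have "(transpose x *v w) $ j = (\<Sum>k\<in>UNIV. x $ k $ j * w $ k)"
    by (simp add: matrix_vector_mult_def transpose_def)
  also have "\<dots> = (\<Sum>k\<in>UNIV. if k = j then w $ j else 0)"
  proof (rule sum.cong)
    fix k
    show "x $ k $ j * w $ k = (if k = j then w $ j else 0)"
      using ux w by (cases k j rule: linorder_cases) (auto simp: upper_unipotent_def)
  qed simp
  finally show ?thesis by simp
qed

lemma xt_W: assumes "upper_unipotent x" "w \<in> Wset i" shows "(transpose x *v w) $ i = 1"
  using xt_nth[OF assms(1)] assms(2) by (simp add: Wset_def)

lemma axis_nth: "axis i c $ j = (if j = i then c else 0)"
  by (simp add: axis_def)

lemma w0_exists:
  fixes x :: "real^('n::{finite,linorder})^('n::{finite,linorder})"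
  assumes ux: "upper_unipotent x"
  shows "\<exists>w\<in>Wset i. transpose x *v w = axis i 1"
proof -
  have "det (transpose x) \<noteq> 0" using upper_det[OF ux] by (simp add: det_transpose)
  then obtain A' where "transpose x ** A' = mat 1" using invertible_det_nz unfolding invertible_def by blast
  then have tw: "transpose x *v (A' *v axis i 1) = axis i 1" by (simp add: matrix_vector_mul_assoc)
  define w where "w = A' *v axis i 1"
  have "\<forall>j. pos j = m \<longrightarrow> j < i \<longrightarrow> w $ j = 0" for m
  proof (induction m rule: less_induct)
    case (less m)
    show ?case
    proof (intro allI impI)
      fix j assume j: "pos j = m" "j < i"
      have "\<forall>k<j. w $ k = 0" using less j pos_mono by fastforce
      then have "w $ j = (transpose x *v w) $ j" using xt_nth[OF ux] by simp
      then show "w $ j = 0" using tw j(2) unfolding w_def by (simp add: axis_nth)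
    qed
  qed
  then have low: "\<forall>j<i. w $ j = 0" by blast
  then have "w $ i = (transpose x *v w) $ i" using xt_nth[OF ux] by simp
  then have "w $ i = 1" using tw unfolding w_def by (simp add: axis_nth)
  then have "w \<in> Wset i" using low by (simp add: Wset_def)
  then show ?thesis using tw unfolding w_def by blast
qed

lemma norm_axis: "norm (axis i (c::real)) = \<bar>c\<bar>"
proof -
  have "axis i c = c *\<^sub>R axis i 1" by (simp add: vec_eq_iff axis_def)
  then show ?thesis by (simp add: norm_axis_1)
qed

lemma diagm_axis: "diagm d *v axis i c = axis i (d i * c)"
  by (simp add: vec_eq_iff diagm_mv_nth axis_nth)

lemma ainf_eq:
  fixes x :: "real^('n::{finite,linorder})^('n::{finite,linorder})"
  assumes ux: "upper_unipotent x" and ox: "orthogonal_matrix \<xi>" and dpos: "\<And>k. d k > 0"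
    and g: "g = x ** diagm d ** \<xi>"
  shows "ainf g i = d i"
proof -
  have tg: "transpose g *v w = transpose \<xi> *v (diagm d *v (transpose x *v w))" for w
    unfolding g by (simp only: matrix_transpose_mul transpose_diagm matrix_vector_mul_assoc matrix_mul_assoc)
  have ntg: "norm (transpose g *v w) = norm (diagm d *v (transpose x *v w))" for w
    unfolding tg by (rule orth_norm) (simp add: ox)
  have lower: "d i \<le> norm (transpose g *v w)" if "w \<in> Wset i" for w
  proof -
    have "\<bar>(diagm d *v (transpose x *v w)) $ i\<bar> \<le> norm (diagm d *v (transpose x *v w))"
      by (rule component_le_norm_cart)
    then show ?thesis unfolding ntg diagm_mv_nth xt_W[OF ux that] using dpos[of i] by simp
  qed
  obtain w0 where w0: "w0 \<in> Wset i" "transpose x *v w0 = axis i 1" using w0_exists[OF ux] by blast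
  have dn: "norm (transpose g *v w0) = d i"
    unfolding ntg w0(2) diagm_axis using dpos[of i] by (simp add: norm_axis)
  have mem: "d i \<in> (\<lambda>w. norm (transpose g *v w)) ` Wset i"
    by (rule rev_image_eqI[OF w0(1)]) (rule dn[symmetric])
  show ?thesis unfolding ainf_def
    by (rule cInf_eq_minimum[OF mem]) (use lower in auto)
qed

lemma ainf_bounds:
  fixes x :: "real^('n::{finite,linorder})^('n::{finite,linorder})"
  assumes ux: "upper_unipotent x" and ox: "orthogonal_matrix \<xi>" and dpos: "\<And>k. d k > 0"
    and g: "g = x ** diagm d ** \<xi>"
    and o1: "orthogonal_matrix \<xi>1" and o2: "orthogonal_matrix \<xi>2" and g2: "g = \<xi>1 ** exp_diag a ** \<xi>2"
  shows "exp (- norm a) \<le> d i" "d i \<le> exp (norm a)"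
proof -
  have tg: "transpose g *v w = transpose \<xi> *v (diagm d *v (transpose x *v w))" for w
    unfolding g by (simp only: matrix_transpose_mul transpose_diagm matrix_vector_mul_assoc matrix_mul_assoc)
  have ntg: "norm (transpose g *v w) = norm (diagm d *v (transpose x *v w))" for w
    unfolding tg by (rule orth_norm) (simp add: ox)
  obtain w0 where w0: "w0 \<in> Wset i" "transpose x *v w0 = axis i 1" using w0_exists[OF ux] by blast
  have di: "norm (transpose g *v w0) = d i"
    unfolding ntg w0(2) diagm_axis using dpos[of i] by (simp add: norm_axis)
  have tg2: "transpose g *v w = transpose \<xi>2 *v (exp_diag a *v (transpose \<xi>1 *v w))" for w
    unfolding g2 by (simp only: matrix_transpose_mul exp_diag_diagm transpose_diagm matrix_vector_mul_assoc matrix_mul_assoc)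
  have "norm (transpose g *v w0) = norm (exp_diag a *v (transpose \<xi>1 *v w0))"
    unfolding tg2 by (rule orth_norm) (simp add: o2)
  also have "\<dots> \<ge> exp (- norm a) * norm (transpose \<xi>1 *v w0)" by (rule exp_diag_bounds(1))
  also have "norm (transpose \<xi>1 *v w0) = norm w0" by (rule orth_norm) (simp add: o1)
  finally have "exp (- norm a) * norm w0 \<le> d i" using di by simp
  moreover have "1 \<le> norm w0" using component_le_norm_cart[of w0 i] w0(1) by (simp add: Wset_def)
  moreover have "exp (- norm a) * 1 \<le> exp (- norm a) * norm w0"
    using \<open>1 \<le> norm w0\<close> by (intro mult_left_mono) auto
  ultimately show "exp (- norm a) \<le> d i" by linarith
  define v where "v = transpose \<xi> *v axis i 1"
  have gv: "g *v v = x *v axis i (d i)"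
  proof -
    have e: "\<xi> ** transpose \<xi> = mat 1" using ox by (simp add: orthogonal_matrix_def)
    have "g *v v = (x ** diagm d ** (\<xi> ** transpose \<xi>)) *v axis i 1"
      unfolding g v_def by (simp only: matrix_vector_mul_assoc matrix_mul_assoc)
    also have "\<dots> = x *v (diagm d *v axis i 1)"
      unfolding e by (simp only: matrix_mul_rid matrix_vector_mul_assoc)
    finally show ?thesis by (simp add: diagm_axis)
  qed
  have "(x *v axis i (d i)) $ i = d i"
  proof -
    have "(x *v axis i (d i)) $ i = (\<Sum>k\<in>UNIV. x$i$k * axis i (d i) $ k)"
      by (simp add: matrix_vector_mult_def)
    also have "\<dots> = (\<Sum>k\<in>UNIV. if k = i then d i else 0)"
      by (rule sum.cong) (use ux in \<open>auto simp: axis_nth upper_unipotent_def\<close>)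
    finally have "(x *v axis i (d i)) $ i = (\<Sum>k\<in>UNIV. if k = i then d i else 0)" .
    then show ?thesis by simp
  qed
  then have "d i \<le> norm (g *v v)" using component_le_norm_cart[of "g *v v" i] gv dpos[of i] by simp
  also have "norm (g *v v) = norm (exp_diag a *v (\<xi>2 *v v))"
    unfolding g2 by (simp add: matrix_vector_mul_assoc[symmetric] orth_norm[OF o1])
  also have "\<dots> \<le> exp (norm a) * norm (\<xi>2 *v v)" by (rule exp_diag_bounds(2))
  also have "norm (\<xi>2 *v v) = 1"
  proof -
    have "norm (\<xi>2 *v v) = norm v" by (rule orth_norm[OF o2])
    also have "norm v = norm (axis i (1::real))" unfolding v_def by (rule orth_norm) (simp add: ox)
    finally show ?thesis by (simp add: norm_axis_1)
  qed
  finally show "d i \<le> exp (norm a)" by simp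
qed


lemma cont_tg: "continuous_on UNIV (\<lambda>g::real^'n^'m. transpose g *v w)"
proof -
  have "bounded_linear (\<lambda>g::real^'n^'m. transpose g *v w)"
    apply (intro linear_conv_bounded_linear[THEN iffD1] linearI)
     apply (simp add: transpose_def matrix_vector_mult_def vec_eq_iff sum.distrib algebra_simps)
    apply (simp add: transpose_def matrix_vector_mult_def vec_eq_iff sum_distrib_left algebra_simps)
    done
  then show ?thesis by (rule linear_continuous_on)
qed

lemma ainf_meas: "(\<lambda>g. ainf g i) \<in> borel_measurable borel"
proof (rule borel_measurable_iff_less[THEN iffD2], intro allI)
  fix t :: real
  have ne: "(\<lambda>w. norm (transpose g *v w)) ` Wset i \<noteq> {}" for g :: "'a sqmat"
  proof -
    have "axis i 1 \<in> Wset i" by (simp add: Wset_def axis_nth)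
    then show ?thesis by blast
  qed
  have bdd: "bdd_below ((\<lambda>w. norm (transpose g *v w)) ` Wset i)" for g :: "'a sqmat"
    by (rule bdd_belowI[of _ 0]) auto
  have "{g. ainf g i < t} = (\<Union>w\<in>Wset i. {g::'a sqmat. norm (transpose g *v w) < t})"
    unfolding ainf_def using cInf_less_iff[OF ne bdd] by auto
  moreover have "open {g::'a sqmat. norm (transpose g *v w) < t}" for w
    by (rule open_Collect_less) (intro continuous_intros continuous_on_compose2[OF cont_tg], auto)
  ultimately have "open {g::'a sqmat. ainf g i < t}" by auto
  then show "{g \<in> space borel. ainf g i < t} \<in> sets borel" by simp
qed


lemma swap_tri:
  fixes f :: "nat \<Rightarrow> nat \<Rightarrow> 'a::comm_monoid_add"
  shows "(\<Sum>k\<in>{1..N}. \<Sum>i\<in>{1..N-k}. f k i) = (\<Sum>i\<in>{1..N-1}. \<Sum>k\<in>{1..N-i}. f k i)"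
proof -
  have "(\<Sum>k\<in>{1..N}. \<Sum>i\<in>{1..N-k}. f k i) = (\<Sum>k\<in>{1..N}. \<Sum>i\<in>{i\<in>{1..N}. k + i \<le> N}. f k i)"
    by (rule sum.cong) (auto intro!: sum.cong)
  also have "\<dots> = (\<Sum>i\<in>{1..N}. \<Sum>k\<in>{k\<in>{1..N}. k + i \<le> N}. f k i)"
    by (rule sum.swap_restrict) auto
  also have "\<dots> = (\<Sum>i\<in>{1..N}. \<Sum>k\<in>{1..N-i}. f k i)"
    by (rule sum.cong) (auto intro!: sum.cong)
  also have "\<dots> = (\<Sum>i\<in>{1..N-1}. \<Sum>k\<in>{1..N-i}. f k i)"
  proof (cases N)
    case 0 then show ?thesis by simp
  next
    case (Suc M)
    then have "{1..N} = insert N {1..N-1}" by auto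
    then show ?thesis using Suc by simp
  qed
  finally show ?thesis .
qed

lemma sum_nat_real: "(\<Sum>k\<in>{1..N}. real k) = real N * (real N + 1) / 2"
  by (induction N) (simp_all add: algebra_simps)

lemma sum_center: "(\<Sum>k\<in>{1..N}. (real N - 2 * real k + 1)) = 0"
proof -
  have "(\<Sum>k\<in>{1..N}. (real N - 2 * real k + 1)) = (\<Sum>k\<in>{1..N}. (real N + 1)) - 2 * (\<Sum>k\<in>{1..N}. real k)"
    by (simp add: sum_subtractf sum_distrib_left algebra_simps)
  also have "\<dots> = 0" unfolding sum_nat_real by (simp add: algebra_simps)
  finally show ?thesis .
qed

definition sk :: "nat \<Rightarrow> (nat \<Rightarrow> complex) \<Rightarrow> nat \<Rightarrow> complex" where
  "sk N l k = l k + complex_of_real ((real N - 2 * real k + 1) / 2)"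

lemma sum_sk: assumes "(\<Sum>j\<in>{1..N}. l j) = 0" shows "(\<Sum>k\<in>{1..N}. sk N l k) = 0"
proof -
  have "(\<Sum>k\<in>{1..N}. complex_of_real ((real N - 2 * real k + 1) / 2))
      = complex_of_real ((\<Sum>k\<in>{1..N}. (real N - 2 * real k + 1)) / 2)"
    by (simp only: of_real_sum sum_divide_distrib)
  also have "\<dots> = 0" by (simp only: sum_center) simp
  finally have "(\<Sum>k\<in>{1..N}. complex_of_real ((real N - 2 * real k + 1) / 2)) = 0" .
  then show ?thesis unfolding sk_def using assms by (simp only: sum.distrib) simp
qed

definition Phi :: "(nat \<Rightarrow> complex) \<Rightarrow> ('n::{finite,linorder}) sqmat \<Rightarrow> complex" where
  "Phi l g = exp (\<Sum>k\<in>{1..CARD('n)}. sk CARD('n) l k * complex_of_real (ln (ainf g (ep (k - 1)))))"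

lemma phi_eq:
  fixes g :: "('n::{finite,linorder}) sqmat"
  assumes dg: "det g = 1" and ls: "(\<Sum>j\<in>{1..CARD('n)}. l j) = 0"
  shows "phi l g = Phi l g"
proof -
  define N where "N = CARD('n)"
  define y where "y = iwasawa_y g"
  obtain x \<xi> where yp: "\<forall>j\<in>{1..N-1}. y j > 0" and xu: "upper_unipotent x" and xi: "\<xi> \<in> SOn"
    and geq: "g = x ** a_mat y ** \<xi>"
    using iwasawa_prop[OF dg] unfolding N_def y_def by blast
  define c where "c = (\<Prod>j\<in>{1..N-1}. y j ^ (N - j)) powr (-1 / real N)"
  have "(\<Prod>j\<in>{1..N-1}. y j ^ (N - j)) > 0" using yp by (intro prod_pos) auto
  then have cpos: "c > 0" unfolding c_def by (simp only: powr_gt_zero)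
  define dA where "dA i = c * (\<Prod>k\<in>{1..N-1-pos i}. y k)" for i :: 'n
  have amat: "a_mat y = diagm dA" unfolding a_mat_def diagm_def dA_def c_def N_def
    by (simp add: vec_eq_iff)
  have yp': "y k > 0" if "k \<in> {1..N-1-pos i}" for k i using yp that by auto
  have dApos: "dA i > 0" for i unfolding dA_def using cpos yp' by (intro mult_pos_pos prod_pos) auto
  have oxi: "orthogonal_matrix \<xi>" using xi by (simp add: SOn_def rotation_matrix_def)
  have ai: "ainf g i = dA i" for i by (rule ainf_eq[OF xu oxi dApos]) (use geq amat in simp)
  have lnA: "ln (ainf g (ep (k-1))) = ln c + (\<Sum>i\<in>{1..N-k}. ln (y i))" if k: "k \<in> {1..N}" for k
  proof -
    have "pos (ep (k-1) :: 'n) = k - 1" using k unfolding N_def by (intro pos_ep) auto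
    then have "N - 1 - pos (ep (k-1) :: 'n) = N - k" using k by auto
    then have eqA: "ainf g (ep (k-1)) = c * (\<Prod>i\<in>{1..N-k}. y i)" unfolding ai dA_def by simp
    have yk: "\<And>i. i\<in>{1..N-k} \<Longrightarrow> y i > 0" using yp k by auto
    have lnP: "ln (\<Prod>i\<in>{1..N-k}. y i) = (\<Sum>i\<in>{1..N-k}. ln (y i))"
      by (rule ln_prod) (simp, metis yk less_irrefl)
    have Ppos: "(\<Prod>i\<in>{1..N-k}. y i) > 0" using yk by (intro prod_pos) auto
    have "ln (c * (\<Prod>i\<in>{1..N-k}. y i)) = ln c + ln (\<Prod>i\<in>{1..N-k}. y i)"
    proof -
      have lnm: "\<And>a b::real. a > 0 \<Longrightarrow> b > 0 \<Longrightarrow> ln (a*b) = ln a + ln b" by (simp add: ln_mult)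
      show ?thesis by (rule lnm[OF cpos Ppos])
    qed
    then show ?thesis unfolding eqA lnP .
  qed
  have "Phi l g = exp (\<Sum>k\<in>{1..N}. sk N l k * complex_of_real (ln c + (\<Sum>i\<in>{1..N-k}. ln (y i))))"
    unfolding Phi_def N_def[symmetric]
  proof (intro arg_cong[where f=exp] sum.cong refl)
    fix k assume "k \<in> {1..N}"
    then show "sk N l k * complex_of_real (ln (ainf g (ep (k - 1))))
       = sk N l k * complex_of_real (ln c + (\<Sum>i\<in>{1..N-k}. ln (y i)))" using lnA[of k] by simp
  qed
  also have "(\<Sum>k\<in>{1..N}. sk N l k * complex_of_real (ln c + (\<Sum>i\<in>{1..N-k}. ln (y i))))
      = complex_of_real (ln c) * (\<Sum>k\<in>{1..N}. sk N l k)
        + (\<Sum>k\<in>{1..N}. \<Sum>i\<in>{1..N-k}. sk N l k * complex_of_real (ln (y i)))"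
    by (simp add: distrib_left sum.distrib sum_distrib_left sum_distrib_right mult_ac)
  also have "(\<Sum>k\<in>{1..N}. sk N l k) = 0" using sum_sk ls unfolding N_def by blast
  also have "(\<Sum>k\<in>{1..N}. \<Sum>i\<in>{1..N-k}. sk N l k * complex_of_real (ln (y i)))
      = (\<Sum>i\<in>{1..N-1}. \<Sum>k\<in>{1..N-i}. sk N l k * complex_of_real (ln (y i)))" by (rule swap_tri)
  finally have P: "Phi l g = exp (\<Sum>i\<in>{1..N-1}. (\<Sum>k\<in>{1..N-i}. sk N l k) * complex_of_real (ln (y i)))"
    by (simp add: sum_distrib_right)
  have "phi l g = (\<Prod>j\<in>{1..N-1}. exp ((\<Sum>k\<in>{1..N-j}. sk N l k) * complex_of_real (ln (y j))))"
    unfolding phi_def N_def[symmetric] y_def[symmetric]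
  proof (rule prod.cong)
    fix j assume j: "j \<in> {1..N-1}"
    have "y j > 0" using yp j by blast
    then have "complex_of_real (y j) \<noteq> 0" by simp
    then show "complex_of_real (y j) powr (\<Sum>k\<in>{1..N-j}. l k + complex_of_real ((real N - 2 * real k + 1) / 2))
        = exp ((\<Sum>k\<in>{1..N-j}. sk N l k) * complex_of_real (ln (y j)))"
      using yp j by (simp add: powr_def sk_def Ln_of_real)
  qed simp
  also have "\<dots> = exp (\<Sum>j\<in>{1..N-1}. (\<Sum>k\<in>{1..N-j}. sk N l k) * complex_of_real (ln (y j)))"
    by (simp add: exp_sum)
  finally show ?thesis using P by simp
qed


lemma exp_bound:
  fixes w :: complex and t M \<gamma> :: real
  assumes t: "t \<ge> 0" and g: "\<gamma> > 0" and wM: "cmod w \<le> M * t" and wR: "\<bar>Re w\<bar> \<le> \<gamma> * t"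
  shows "cmod (exp w - 1) \<le> M * (exp (\<gamma> * t) - 1) / \<gamma>"
proof -
  define f where "f s = exp (complex_of_real s * w)" for s :: real
  define f' where "f' s = w * exp (complex_of_real s * w)" for s :: real
  define G where "G s = M * exp (s * (\<gamma> * t)) / \<gamma>" for s :: real
  define G' where "G' s = M * t * exp (s * (\<gamma> * t))" for s :: real
  have fd: "(f has_vector_derivative f' s) (at s within {0..1})" for s
  proof -
    have "((\<lambda>z. exp (z * w)) has_field_derivative w * exp (complex_of_real s * w)) (at (complex_of_real s))"
      by (auto intro!: derivative_eq_intros)
    then show ?thesis unfolding f_def f'_def by (rule has_vector_derivative_real_field)
  qed
  have fi: "(f' has_integral (f 1 - f 0)) {0..1}"
    by (rule fundamental_theorem_of_calculus) (auto intro: fd)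
  have Gd: "(G has_vector_derivative G' s) (at s within {0..1})" for s
  proof -
    have "(G has_real_derivative G' s) (at s within {0..1})"
      unfolding G_def G'_def using g by (auto intro!: derivative_eq_intros)
    then show ?thesis by (simp add: has_real_derivative_iff_has_vector_derivative)
  qed
  have Gi: "(G' has_integral (G 1 - G 0)) {0..1}"
    by (rule fundamental_theorem_of_calculus) (auto intro: Gd)
  have bnd: "norm (f' s) \<le> G' s" if "s \<in> {0..1}" for s
  proof -
    have s: "0 \<le> s" "s \<le> 1" using that by auto
    have "norm (f' s) = cmod w * exp (s * Re w)" unfolding f'_def by (simp add: norm_mult)
    also have "\<dots> \<le> (M * t) * exp (s * (\<gamma> * t))"
    proof (rule mult_mono)
      have "s * Re w \<le> s * (\<gamma> * t)" using wR s(1) by (intro mult_left_mono) auto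
      then show "exp (s * Re w) \<le> exp (s * (\<gamma> * t))" by simp
    next
      show "0 \<le> M * t" using wM norm_ge_zero[of w] by linarith
    qed (use wM in auto)
    finally show ?thesis unfolding G'_def by simp
  qed
  have "norm (integral {0..1} f') \<le> integral {0..1} G'"
    by (rule Henstock_Kurzweil_Integration.integral_norm_bound_integral)
       (use fi Gi bnd in \<open>auto simp: has_integral_integrable\<close>)
  then have "norm (f 1 - f 0) \<le> G 1 - G 0"
    using integral_unique[OF fi] integral_unique[OF Gi] by simp
  then show ?thesis unfolding f_def G_def by (simp add: diff_divide_distrib right_diff_distrib)
qed


lemma absum_step:
  "(\<Sum>k\<in>{1..Suc (Suc N)}. \<bar>real (Suc (Suc N)) - 2 * real k + 1\<bar>)
     = (\<Sum>k\<in>{1..N}. \<bar>real N - 2 * real k + 1\<bar>) + 2 * (real N + 1)"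
proof -
  define h where "h k = \<bar>real (Suc (Suc N)) - 2 * real k + 1\<bar>" for k
  have "{1..Suc (Suc N)} = insert (Suc (Suc N)) (insert 1 {Suc 1..Suc N})" by auto
  then have "(\<Sum>k\<in>{1..Suc (Suc N)}. h k) = h (Suc (Suc N)) + h 1 + (\<Sum>k\<in>{Suc 1..Suc N}. h k)"
    by simp
  also have "(\<Sum>k\<in>{Suc 1..Suc N}. h k) = (\<Sum>k\<in>{1..N}. h (Suc k))"
    by (rule sum.shift_bounds_cl_Suc_ivl)
  also have "(\<Sum>k\<in>{1..N}. h (Suc k)) = (\<Sum>k\<in>{1..N}. \<bar>real N - 2 * real k + 1\<bar>)"
    unfolding h_def by (rule sum.cong) (auto simp: algebra_simps)
  also have "h (Suc (Suc N)) = real N + 1" unfolding h_def by simp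
  also have "h 1 = real N + 1" unfolding h_def by simp
  finally show ?thesis unfolding h_def by simp
qed

lemma absum: "(\<Sum>k\<in>{1..N}. \<bar>real N - 2 * real k + 1\<bar>) \<le> real N ^ 2 / 2"
proof -
  have "(\<Sum>k\<in>{1..N}. \<bar>real N - 2 * real k + 1\<bar>) \<le> real N ^ 2 / 2
     \<and> (\<Sum>k\<in>{1..Suc N}. \<bar>real (Suc N) - 2 * real k + 1\<bar>) \<le> real (Suc N) ^ 2 / 2" for N
  proof (induction N)
    case 0 then show ?case by simp
  next
    case (Suc N)
    then have "(\<Sum>k\<in>{1..N}. \<bar>real N - 2 * real k + 1\<bar>) \<le> real N ^ 2 / 2" by blast
    then have "(\<Sum>k\<in>{1..Suc (Suc N)}. \<bar>real (Suc (Suc N)) - 2 * real k + 1\<bar>) \<le> real (Suc (Suc N)) ^ 2 / 2"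
      unfolding absum_step by (simp add: power2_eq_square algebra_simps)
    then show ?case using Suc by blast
  qed
  then show ?thesis by blast
qed


lemma sum_Re_bound:
  assumes N2: "N \<ge> 2" and Rl: "\<forall>j\<in>{1..N}. \<bar>Re (l j)\<bar> < 1/2"
  shows "(\<Sum>k\<in>{1..N}. \<bar>Re (sk N l k)\<bar>) \<le> real (N * (N + 6)) / 4"
proof -
  have "(\<Sum>k\<in>{1..N}. \<bar>Re (sk N l k)\<bar>) \<le> (\<Sum>k\<in>{1..N}. 1/2 + \<bar>real N - 2 * real k + 1\<bar> / 2)"
  proof (rule sum_mono)
    fix k assume k: "k \<in> {1..N}"
    have "Re (sk N l k) = Re (l k) + (real N - 2 * real k + 1) / 2" by (simp add: sk_def)
    moreover have "\<bar>Re (l k)\<bar> < 1/2" using Rl k by blast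
    moreover have "\<bar>Re (l k) + (real N - 2 * real k + 1) / 2\<bar> \<le> \<bar>Re (l k)\<bar> + \<bar>(real N - 2 * real k + 1) / 2\<bar>"
      by (rule abs_triangle_ineq)
    ultimately show "\<bar>Re (sk N l k)\<bar> \<le> 1/2 + \<bar>real N - 2 * real k + 1\<bar> / 2" by simp
  qed
  also have "\<dots> = real N / 2 + (\<Sum>k\<in>{1..N}. \<bar>real N - 2 * real k + 1\<bar>) / 2"
    by (simp add: sum.distrib sum_divide_distrib)
  also have "\<dots> \<le> real N / 2 + (real N ^ 2 / 2) / 2" using absum[of N] by simp
  also have "\<dots> \<le> real (N * (N + 6)) / 4" by (simp add: power2_eq_square algebra_simps)
  finally show ?thesis .
qed

lemma M_pos:
  assumes N2: "N \<ge> 2" and Rl: "\<forall>j\<in>{1..N}. \<bar>Re (l j)\<bar> < 1/2"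
  shows "(\<Sum>k\<in>{1..N}. cmod (sk N l k)) > 0"
proof -
  have "Re (sk N l 1) = Re (l 1) + (real N - 1) / 2" by (simp add: sk_def)
  moreover have "\<bar>Re (l 1)\<bar> < 1/2" using Rl N2 by auto
  moreover have "real N \<ge> 2" using N2 by simp
  moreover have "Re (l 1) > -1/2" using \<open>\<bar>Re (l 1)\<bar> < 1/2\<close> by (simp add: abs_less_iff)
  moreover have "(real N - 1) / 2 \<ge> 1/2" using \<open>real N \<ge> 2\<close> by simp
  ultimately have "Re (sk N l 1) > 0" by linarith
  then have "sk N l 1 \<noteq> 0" by auto
  then have "cmod (sk N l 1) > 0" by simp
  moreover have "cmod (sk N l 1) \<le> (\<Sum>k\<in>{1..N}. cmod (sk N l k))"
    by (rule member_le_sum) (use N2 in auto)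
  ultimately show ?thesis by linarith
qed

lemma Phi_bound:
  fixes g :: "('n::{finite,linorder}) sqmat" and l :: "nat \<Rightarrow> complex"
  defines "N \<equiv> CARD('n)"
  defines "\<gamma> \<equiv> real (N * (N + 6)) / 4"
  defines "M \<equiv> (\<Sum>k\<in>{1..N}. cmod (sk N l k))"
  assumes N2: "N \<ge> 2" and Rl: "\<forall>j\<in>{1..N}. \<bar>Re (l j)\<bar> < 1/2"
    and dg: "det g = 1" and ph: "polar_height g < \<delta>"
  shows "cmod (Phi l g - 1) < M * (exp (\<gamma> * \<delta>) - 1) / \<gamma>"
proof -
  obtain \<xi>1 \<xi>2 a where sv: "\<xi>1 \<in> SOn" "\<xi>2 \<in> SOn" "g = \<xi>1 ** exp_diag a ** \<xi>2" "polar_height g = norm a"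
    using polar_prop[OF dg] by blast
  obtain x d \<xi> where rq: "upper_unipotent x" "\<xi> \<in> SOn" "\<forall>i. d i > 0" "g = x ** diagm d ** \<xi>"
    using rq_exists[OF dg] by blast
  have o: "orthogonal_matrix \<xi>" "orthogonal_matrix \<xi>1" "orthogonal_matrix \<xi>2"
    using rq(2) sv(1,2) by (auto simp: SOn_def rotation_matrix_def)
  define t where "t = norm a"
  have tpos: "t \<ge> 0" unfolding t_def by simp
  have td: "t < \<delta>" using ph sv(4) unfolding t_def by simp
  define r where "r k = ln (ainf g (ep (k - 1) :: 'n))" for k
  have rb: "\<bar>r k\<bar> \<le> t" for k
  proof -
    have ai: "ainf g i = d i" for i by (rule ainf_eq[OF rq(1) o(1)]) (use rq in auto)
    have b1: "exp (- norm a) \<le> d i" "d i \<le> exp (norm a)" for i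
      using ainf_bounds[OF rq(1) o(1) _ rq(4) o(2) o(3) sv(3)] rq(3) by auto
    have dp: "d i > 0" for i using rq(3) by auto
    have "- norm a \<le> ln (d i)" for i using b1(1)[of i] dp[of i] by (metis ln_exp ln_le_cancel_iff exp_gt_zero)
    moreover have "ln (d i) \<le> norm a" for i using b1(2)[of i] dp[of i] by (metis ln_exp ln_le_cancel_iff exp_gt_zero)
    ultimately have "- norm a \<le> ln (d (ep (k - 1))) \<and> ln (d (ep (k - 1))) \<le> norm a" by blast
    then show ?thesis unfolding r_def ai t_def by (auto simp: abs_le_iff)
  qed
  define w where "w = (\<Sum>k\<in>{1..N}. sk N l k * complex_of_real (r k))"
  have PhiW: "Phi l g = exp w" unfolding Phi_def w_def r_def N_def ..
  have wM: "cmod w \<le> M * t"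
  proof -
    have "cmod w \<le> (\<Sum>k\<in>{1..N}. cmod (sk N l k * complex_of_real (r k)))" unfolding w_def
      by (rule norm_sum)
    also have "\<dots> \<le> (\<Sum>k\<in>{1..N}. cmod (sk N l k) * t)"
      by (rule sum_mono) (simp add: norm_mult mult_left_mono rb)
    also have "\<dots> = M * t" unfolding M_def by (simp add: sum_distrib_right)
    finally show ?thesis .
  qed
  have wR: "\<bar>Re w\<bar> \<le> \<gamma> * t"
  proof -
    have "Re w = (\<Sum>k\<in>{1..N}. Re (sk N l k) * r k)" unfolding w_def by (simp add: Re_sum)
    then have "\<bar>Re w\<bar> \<le> (\<Sum>k\<in>{1..N}. \<bar>Re (sk N l k) * r k\<bar>)" by (simp add: sum_abs)
    also have "\<dots> \<le> (\<Sum>k\<in>{1..N}. \<bar>Re (sk N l k)\<bar> * t)"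
      by (rule sum_mono) (simp add: abs_mult mult_left_mono rb)
    also have "\<dots> = (\<Sum>k\<in>{1..N}. \<bar>Re (sk N l k)\<bar>) * t" by (simp add: sum_distrib_right)
    also have "\<dots> \<le> \<gamma> * t" unfolding \<gamma>_def using sum_Re_bound[OF N2 Rl] tpos by (rule mult_right_mono)
    finally show ?thesis .
  qed
  have gpos: "\<gamma> > 0" unfolding \<gamma>_def using N2 by simp
  have "cmod (Phi l g - 1) \<le> M * (exp (\<gamma> * t) - 1) / \<gamma>"
    unfolding PhiW by (rule exp_bound[OF tpos gpos wM wR])
  also have "\<dots> < M * (exp (\<gamma> * \<delta>) - 1) / \<gamma>"
  proof -
    have "exp (\<gamma> * t) < exp (\<gamma> * \<delta>)" using td gpos by simp
    moreover have "M > 0" unfolding M_def by (rule M_pos[OF N2 Rl])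
    ultimately show ?thesis using gpos by (simp add: divide_strict_right_mono)
  qed
  finally show ?thesis .
qed


lemma det_meas: "det \<in> borel_measurable (borel :: ('n::finite) sqmat measure)"
proof -
  have "continuous_on UNIV (\<lambda>g::'n sqmat. g $ i $ j)" for i j
    by (intro continuous_on_component continuous_on_id)
  then have m: "(\<lambda>g::'n sqmat. g $ i $ j) \<in> borel_measurable borel" for i j
    by (rule borel_measurable_continuous_onI)
  show ?thesis unfolding det_def[abs_def]
    by (intro borel_measurable_sum borel_measurable_times borel_measurable_prod borel_measurable_const m)
qed

lemma SLn_sets: "SLn \<in> sets (borel :: ('n::finite) sqmat measure)"
proof -
  have "SLn = {g \<in> space (borel :: 'n sqmat measure). det g = 1}" by (simp add: SLn_def)
  also have "\<dots> \<in> sets borel" using det_meas by measurable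
  finally show ?thesis .
qed

lemma smooth_cont: "smooth_fun F \<Longrightarrow> continuous_on UNIV F"
  by (erule smooth_fun.cases) (auto intro!: continuous_at_imp_continuous_on differentiable_imp_continuous_within)

lemma Phi_meas: "Phi l \<in> borel_measurable (borel :: ('n::{finite,linorder}) sqmat measure)"
proof -
  have [measurable]: "(\<lambda>g. ainf g i) \<in> borel_measurable (borel :: ('n::{finite,linorder}) sqmat measure)" for i
    by (rule ainf_meas)
  show ?thesis unfolding Phi_def[abs_def] by measurable
qed


theorem lemma2p3:
  fixes \<mu> :: "('n::{finite,linorder}) sqmat measure"
    and l :: "nat \<Rightarrow> complex" and \<delta> :: real and H :: "'n sqmat \<Rightarrow> real"
  assumes "CARD('n) \<ge> 2"
    and "(\<Sum>j\<in>{1..CARD('n)}. l j) = 0"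
    and "\<forall>j\<in>{1..CARD('n)}. \<bar>Re (l j)\<bar> < 1/2"
    and "\<delta> > 0"
    and "LB CARD('n) \<delta> l > 0"
    and "haar_SL \<mu>"
    and "standard_bump \<mu> \<delta> H"
  shows "cmod (spherical_transform \<mu> H l) > LB CARD('n) \<delta> l"
proof -
  define N where "N = CARD('n)"
  define \<gamma> where "\<gamma> = real (N * (N + 6)) / 4"
  define M where "M = (\<Sum>k\<in>{1..N}. cmod (sk N l k))"
  define K where "K = M * (exp (\<gamma> * \<delta>) - 1) / \<gamma>"
  have N2: "N \<ge> 2" using assms(1) unfolding N_def .
  have Rl: "\<forall>j\<in>{1..N}. \<bar>Re (l j)\<bar> < 1/2" using assms(3) unfolding N_def .
  have gpos: "\<gamma> > 0" unfolding \<gamma>_def using N2 by simp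
  have Mpos: "M > 0" unfolding M_def by (rule M_pos[OF N2 Rl])
  have Kpos: "K > 0" unfolding K_def using gpos Mpos assms(4) by simp
  have LBeq: "LB CARD('n) \<delta> l = 1 - K"
  proof -
    have "(\<Sum>j\<in>{1..N}. cmod (l j + complex_of_real ((real N - 2 * real j + 1) / 2))) = M"
      unfolding M_def sk_def ..
    moreover have "real (N * (N + 6)) > 0" using N2 by simp
    ultimately show ?thesis unfolding LB_def N_def[symmetric] K_def \<gamma>_def
      by (simp add: field_simps)
  qed
  from assms(7) have H0: "\<And>g. g \<notin> SLn \<Longrightarrow> H g = 0"
    and Fex: "\<exists>F. smooth_fun F \<and> (\<forall>g\<in>SLn. F g = H g)"
    and supp: "closure {g \<in> SLn. H g \<noteq> 0} \<subseteq> ball_SL \<delta>"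
    and Hnn: "\<And>g. H g \<ge> 0"
    and H1: "(\<integral>g. H g \<partial>\<mu>) = 1"
    unfolding standard_bump_def by auto
  obtain F where F: "smooth_fun F" "\<forall>g\<in>SLn. F g = H g" using Fex by blast
  have sets: "sets \<mu> = sets borel" using assms(6) unfolding haar_SL_def by blast
  have Hmeas: "H \<in> borel_measurable \<mu>"
  proof -
    have Heq: "H = (\<lambda>g. indicator SLn g * F g)"
    proof
      fix g show "H g = indicator SLn g * F g"
        by (cases "g \<in> SLn") (simp_all add: F(2) H0)
    qed
    have Fm: "F \<in> borel_measurable borel" using smooth_cont[OF F(1)] by (rule borel_measurable_continuous_onI)
    have "(\<lambda>g. indicator SLn g * F g) \<in> borel_measurable borel"
      by (intro borel_measurable_times borel_measurable_indicator SLn_sets Fm)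
    then show ?thesis unfolding Heq by (subst measurable_cong_sets[OF sets refl])
  qed
  have Hint: "integrable \<mu> H" using H1 not_integrable_integral_eq by fastforce
  have hb: "det g = 1 \<and> phi l g = Phi l g \<and> cmod (Phi l g - 1) < K" if Hg: "H g \<noteq> 0" for g
  proof -
    have gS: "g \<in> SLn" using H0 Hg by blast
    then have dg: "det g = 1" by (simp add: SLn_def)
    have "g \<in> closure {g \<in> SLn. H g \<noteq> 0}" using gS Hg by (intro closure_subset[THEN subsetD]) auto
    then have "g \<in> ball_SL \<delta>" using supp by blast
    then have ph: "polar_height g < \<delta>" by (simp add: ball_SL_def)
    have "phi l g = Phi l g" by (rule phi_eq[OF dg assms(2)])
    moreover have "cmod (Phi l g - 1) < K"
      using Phi_bound[OF _ _ dg ph, of l] N2 Rl unfolding K_def M_def \<gamma>_def N_def by simp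
    ultimately show ?thesis using dg by blast
  qed
  have PhiM: "Phi l \<in> borel_measurable \<mu>" by (subst measurable_cong_sets[OF sets refl]) (rule Phi_meas)
  have ST: "spherical_transform \<mu> H l = (\<integral>g. complex_of_real (H g) * Phi l g \<partial>\<mu>)"
    unfolding spherical_transform_def
    by (rule Bochner_Integration.integral_cong) (auto dest: hb)
  have nb: "norm (complex_of_real (H g) * (Phi l g - 1)) \<le> norm (H g * K)" for g
  proof (cases "H g = 0")
    case True then show ?thesis by simp
  next
    case False
    then have "cmod (Phi l g - 1) \<le> K" using hb by (simp add: less_imp_le)
    then show ?thesis using Hnn[of g] Kpos by (simp add: norm_mult abs_mult mult_left_mono)
  qed
  have int1: "integrable \<mu> (\<lambda>g. complex_of_real (H g) * (Phi l g - 1))"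
  proof (rule Bochner_Integration.integrable_bound[of _ "\<lambda>g. H g * K"])
    show "integrable \<mu> (\<lambda>g. H g * K)" using Hint by simp
    show "(\<lambda>g. complex_of_real (H g) * (Phi l g - 1)) \<in> borel_measurable \<mu>"
      using Hmeas PhiM by measurable
  qed (use nb in auto)
  have intH: "integrable \<mu> (\<lambda>g. complex_of_real (H g))" using Hint by simp
  define E where "E = (\<integral>g. complex_of_real (H g) * (Phi l g - 1) \<partial>\<mu>)"
  have "(\<integral>g. complex_of_real (H g) * Phi l g \<partial>\<mu>)
      = (\<integral>g. complex_of_real (H g) + complex_of_real (H g) * (Phi l g - 1) \<partial>\<mu>)"
    by (rule Bochner_Integration.integral_cong) (simp_all add: algebra_simps)
  also have "\<dots> = (\<integral>g. complex_of_real (H g) \<partial>\<mu>) + E"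
    unfolding E_def by (rule Bochner_Integration.integral_add[OF intH int1])
  also have "(\<integral>g. complex_of_real (H g) \<partial>\<mu>) = 1" using H1 by simp
  finally have STE: "spherical_transform \<mu> H l = 1 + E" using ST by simp
  have int2: "integrable \<mu> (\<lambda>g. H g * cmod (Phi l g - 1))"
  proof -
    have "integrable \<mu> (\<lambda>g. norm (complex_of_real (H g) * (Phi l g - 1)))"
      using int1 by (rule integrable_norm)
    moreover have "norm (complex_of_real (H g) * (Phi l g - 1)) = H g * cmod (Phi l g - 1)" for g
      using Hnn[of g] by (simp add: norm_mult)
    ultimately show ?thesis by simp
  qed
  have Eb: "cmod E \<le> (\<integral>g. H g * cmod (Phi l g - 1) \<partial>\<mu>)"
  proof -
    have "cmod E \<le> (\<integral>g. norm (complex_of_real (H g) * (Phi l g - 1)) \<partial>\<mu>)"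
      unfolding E_def by (rule integral_norm_bound)
    also have "\<dots> = (\<integral>g. H g * cmod (Phi l g - 1) \<partial>\<mu>)"
      by (rule Bochner_Integration.integral_cong) (simp_all add: norm_mult Hnn)
    finally show ?thesis .
  qed
  define F2 where "F2 g = H g * K - H g * cmod (Phi l g - 1)" for g
  have intF2: "integrable \<mu> F2" unfolding F2_def using Hint int2 by simp
  have F2nn: "F2 g \<ge> 0" for g
  proof (cases "H g = 0")
    case True then show ?thesis by (simp add: F2_def)
  next
    case False
    then have "cmod (Phi l g - 1) \<le> K" using hb by (simp add: less_imp_le)
    then show ?thesis unfolding F2_def using Hnn[of g] by (simp add: mult_left_mono)
  qed
  have intF2eq: "(\<integral>g. F2 g \<partial>\<mu>) = K - (\<integral>g. H g * cmod (Phi l g - 1) \<partial>\<mu>)"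
  proof -
    have "(\<integral>g. F2 g \<partial>\<mu>) = (\<integral>g. H g * K \<partial>\<mu>) - (\<integral>g. H g * cmod (Phi l g - 1) \<partial>\<mu>)"
      unfolding F2_def by (rule Bochner_Integration.integral_diff) (use Hint int2 in simp_all)
    also have "(\<integral>g. H g * K \<partial>\<mu>) = K" using H1 by simp
    finally show ?thesis .
  qed
  have "(\<integral>g. F2 g \<partial>\<mu>) \<noteq> 0"
  proof
    assume "(\<integral>g. F2 g \<partial>\<mu>) = 0"
    then have "AE g in \<mu>. F2 g = 0"
      using integral_nonneg_eq_0_iff_AE[OF intF2] F2nn by simp
    then have "AE g in \<mu>. H g = 0"
    proof (rule AE_mp, intro AE_I2 impI)
      fix g assume "F2 g = 0"
      show "H g = 0"
      proof (rule ccontr)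
        assume Hg: "H g \<noteq> 0"
        then have "cmod (Phi l g - 1) < K" using hb by blast
        moreover have "H g > 0" using Hg Hnn[of g] by simp
        ultimately have "F2 g > 0" unfolding F2_def
          by (metis diff_gt_0_iff_gt mult_strict_left_mono)
        then show False using \<open>F2 g = 0\<close> by simp
      qed
    qed
    then have "(\<integral>g. H g \<partial>\<mu>) = 0" by (rule integral_eq_zero_AE)
    then show False using H1 by simp
  qed
  moreover have "(\<integral>g. F2 g \<partial>\<mu>) \<ge> 0" using F2nn by (simp add: Bochner_Integration.integral_nonneg)
  ultimately have "(\<integral>g. F2 g \<partial>\<mu>) > 0" by linarith
  then have "(\<integral>g. H g * cmod (Phi l g - 1) \<partial>\<mu>) < K" using intF2eq by simp
  then have "cmod E < K" using Eb by linarith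
  moreover have "1 - cmod E \<le> cmod (1 + E)"
    using norm_triangle_ineq2[of 1 "-E"] by simp
  ultimately show ?thesis unfolding STE LBeq by linarith
qed


end
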